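(* Let $n\ge 2$ and let $\mathcal M_{2n}$ be the Möbius ladder on $2n$ vertices. Then for every vertex $v$ of $\mathcal M_{2n}$, $\gamma_M(\mathcal M_{2n}-v)=\gamma_M(\mathcal M_{2n})-1$; that is, every vertex of $\mathcal M_{2n}$ is a 1-critical-vertex.
   Context: The Möbius ladder $\mathcal M_{2n}$ has vertices $v_1,\dots,v_{2n}$, the cycle edges $v_iv_{i+1}$ ($i=1,\dots,2n$, indices mod $2n$) and the rungs $v_iv_{n+i}$ ($i=1,\dots,n$). $\gamma_M(H)$ is the maximum genus of a connected graph $H$ (largest $k$ such that $H$ embeds cellularly in the orientable surface of genus $k$). A vertex $v$ is a 1-critical-vertex of $G$ if $G-v$ is connected and $\gamma_M(G-v)=\gamma_M(G)-1$. *)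

theory Defs
  imports Main
begin

definition simple_graph :: "'a set \<Rightarrow> 'a set set \<Rightarrow> bool" where
  "simple_graph V E \<longleftrightarrow> finite V \<and> (\<forall>e\<in>E. e \<subseteq> V \<and> card e = 2)"

definition adj :: "'a set set \<Rightarrow> 'a \<Rightarrow> 'a \<Rightarrow> bool" where
  "adj E u v \<longleftrightarrow> u \<noteq> v \<and> {u, v} \<in> E"

definition graph_connected :: "'a set \<Rightarrow> 'a set set \<Rightarrow> bool" where
  "graph_connected V E \<longleftrightarrow> V \<noteq> {} \<and>
     (\<forall>u\<in>V. \<forall>v\<in>V. (u, v) \<in> {(x, y). adj E x y}\<^sup>*)"

definition del_vertex_V :: "'a set \<Rightarrow> 'a \<Rightarrow> 'a set" where
  "del_vertex_V V v = V - {v}"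

definition del_vertex_E :: "'a set set \<Rightarrow> 'a \<Rightarrow> 'a set set" where
  "del_vertex_E E v = {e \<in> E. v \<notin> e}"

text \<open>Orientable cellular embeddings of a connected graph, described combinatorially
  by rotation systems (Heffter--Edmonds). Darts are oriented edges (u,v).\<close>

definition darts :: "'a set set \<Rightarrow> ('a \<times> 'a) set" where
  "darts E = {(u, v). adj E u v}"

definition rotation_system :: "'a set set \<Rightarrow> ('a \<times> 'a \<Rightarrow> 'a \<times> 'a) \<Rightarrow> bool" where
  "rotation_system E rho \<longleftrightarrow>
     bij_betw rho (darts E) (darts E) \<and>
     (\<forall>d. d \<notin> darts E \<longrightarrow> rho d = d) \<and>
     (\<forall>d\<in>darts E. fst (rho d) = fst d) \<and>
     (\<forall>d\<in>darts E. \<forall>d'\<in>darts E. fst d = fst d' \<longrightarrow> (\<exists>k. (rho ^^ k) d = d'))"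

definition face_perm :: "('a \<times> 'a \<Rightarrow> 'a \<times> 'a) \<Rightarrow> 'a \<times> 'a \<Rightarrow> 'a \<times> 'a" where
  "face_perm rho = (\<lambda>(u, v). rho (v, u))"

definition faces :: "'a set set \<Rightarrow> ('a \<times> 'a \<Rightarrow> 'a \<times> 'a) \<Rightarrow> ('a \<times> 'a) set set" where
  "faces E rho = (\<lambda>d. {(face_perm rho ^^ k) d | k. True}) ` darts E"

text \<open>Genus of the orientable cellular embedding given by rho: V - E + F = 2 - 2g.\<close>
definition embedding_genus :: "'a set \<Rightarrow> 'a set set \<Rightarrow> ('a \<times> 'a \<Rightarrow> 'a \<times> 'a) \<Rightarrow> int" where
  "embedding_genus V E rho =
     (2 - int (card V) + int (card E) - int (card (faces E rho))) div 2"

definition max_genus :: "'a set \<Rightarrow> 'a set set \<Rightarrow> int" where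
  "max_genus V E = Max {embedding_genus V E rho | rho. rotation_system E rho}"

definition one_critical_vertex :: "'a set \<Rightarrow> 'a set set \<Rightarrow> 'a \<Rightarrow> bool" where
  "one_critical_vertex V E v \<longleftrightarrow>
     v \<in> V \<and>
     graph_connected (del_vertex_V V v) (del_vertex_E E v) \<and>
     max_genus (del_vertex_V V v) (del_vertex_E E v) = max_genus V E - 1"

text \<open>Moebius ladder M_{2n}: vertex v_i is represented by i - 1 (i = 1..2n).\<close>
definition mobius_V :: "nat \<Rightarrow> nat set" where
  "mobius_V n = {0..<2 * n}"

definition mobius_E :: "nat \<Rightarrow> nat set set" where
  "mobius_E n = {{i, Suc i mod (2 * n)} | i. i < 2 * n} \<union> {{i, i + n} | i. i < n}"

end

theory Submission
  imports Defs
begin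


definition rotR :: "'a set set \<Rightarrow> ('a \<Rightarrow> 'a \<Rightarrow> 'a) \<Rightarrow> 'a \<times> 'a \<Rightarrow> 'a \<times> 'a" where
  "rotR E R = (\<lambda>(u,v). if adj E u v then (u, R u v) else (u,v))"

lemma rotR_simp: "rotR E R (u,v) = (if adj E u v then (u, R u v) else (u,v))"
  by (simp add: rotR_def)

lemma rotR_pow:
  assumes cl: "\<And>u v. adj E u v \<Longrightarrow> adj E u (R u v)" and a: "adj E u v"
  shows "(rotR E R ^^ k) (u,v) = (u, (R u ^^ k) v) \<and> adj E u ((R u ^^ k) v)"
proof (induction k)
  case 0 then show ?case using a by simp
next
  case (Suc k) then show ?case using cl by (simp add: rotR_simp)
qed

lemma rot_generic:
  assumes fin: "finite (darts E)"
  and cl: "\<And>u v. adj E u v \<Longrightarrow> adj E u (R u v)"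
  and inj: "\<And>u v w. adj E u v \<Longrightarrow> adj E u w \<Longrightarrow> R u v = R u w \<Longrightarrow> v = w"
  and tr: "\<And>u v w. adj E u v \<Longrightarrow> adj E u w \<Longrightarrow> \<exists>k. (R u ^^ k) v = w"
  shows "rotation_system E (rotR E R)"
proof -
  have im: "rotR E R ` darts E \<subseteq> darts E"
  proof
    fix x assume "x \<in> rotR E R ` darts E"
    then obtain u v where "adj E u v" "x = rotR E R (u,v)" by (auto simp: darts_def)
    then show "x \<in> darts E" using cl by (simp add: rotR_simp darts_def)
  qed
  have ij: "inj_on (rotR E R) (darts E)"
  proof (rule inj_onI)
    fix x y assume "x \<in> darts E" "y \<in> darts E" "rotR E R x = rotR E R y"
    then obtain u v u' v' where "x = (u,v)" "y = (u',v')" "adj E u v" "adj E u' v'"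
      "(u, R u v) = (u', R u' v')"
      by (auto simp: darts_def rotR_simp)
    then show "x = y" using inj by auto
  qed
  have "bij_betw (rotR E R) (darts E) (darts E)"
    using endo_inj_surj[OF fin im ij] ij by (simp add: bij_betw_def)
  moreover have "\<forall>d. d \<notin> darts E \<longrightarrow> rotR E R d = d"
    by (auto simp: rotR_def darts_def)
  moreover have "\<forall>d\<in>darts E. fst (rotR E R d) = fst d"
    by (auto simp: rotR_def darts_def)
  moreover have "\<forall>d\<in>darts E. \<forall>d'\<in>darts E. fst d = fst d' \<longrightarrow> (\<exists>k. (rotR E R ^^ k) d = d')"
  proof (intro ballI impI)
    fix d d' assume a: "d \<in> darts E" "d' \<in> darts E" "fst d = fst d'"
    obtain u v where d: "d = (u,v)" by (cases d)
    obtain u' w where d': "d' = (u',w)" by (cases d')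
    have "u' = u" "adj E u v" "adj E u w" using a d d' by (auto simp: darts_def)
    then obtain k where "(R u ^^ k) v = w" using tr by blast
    then have "(rotR E R ^^ k) d = d'" using rotR_pow[OF cl \<open>adj E u v\<close>] d d' \<open>u' = u\<close> by simp
    then show "\<exists>k. (rotR E R ^^ k) d = d'" by blast
  qed
  ultimately show ?thesis unfolding rotation_system_def by blast
qed
definition orb :: "('a \<times> 'a \<Rightarrow> 'a \<times> 'a) \<Rightarrow> 'a \<times> 'a \<Rightarrow> ('a \<times> 'a) set" where
  "orb f d = {(f ^^ k) d | k. True}"

lemma funpow_apply_add: "(f ^^ (m + n)) x = (f ^^ m) ((f ^^ n) x)"
  by (simp add: funpow_add)

lemma orb_same:
  assumes "(f ^^ L) d = d" "L > 0"
  shows "orb f ((f ^^ j) d) = orb f d"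
proof
  show "orb f ((f ^^ j) d) \<subseteq> orb f d"
  proof
    fix x assume "x \<in> orb f ((f ^^ j) d)"
    then obtain k where "x = (f ^^ k) ((f ^^ j) d)" by (auto simp: orb_def)
    then have "x = (f ^^ (k + j)) d" by (simp only: funpow_apply_add)
    then show "x \<in> orb f d" by (auto simp: orb_def)
  qed
next
  have per: "(f ^^ (L*i)) d = d" for i
  proof (induction i)
    case 0 then show ?case by simp
  next
    case (Suc i)
    have "(f ^^ (L * Suc i)) d = (f ^^ L) ((f ^^ (L*i)) d)"
      by (simp add: funpow_add)
    then show ?case using Suc assms(1) by simp
  qed
  show "orb f d \<subseteq> orb f ((f ^^ j) d)"
  proof
    fix x assume "x \<in> orb f d"
    then obtain k where x: "x = (f ^^ k) d" by (auto simp: orb_def)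
    have "L * j \<ge> j" using assms(2) by simp
    then have e: "k + L*j = (k + L*j - j) + j" by linarith
    have "(f ^^ (k + L*j - j)) ((f ^^ j) d) = (f ^^ (k + L*j)) d"
      by (subst e) (simp only: funpow_apply_add)
    also have "\<dots> = (f ^^ k) ((f ^^ (L*j)) d)" by (simp only: funpow_apply_add)
    also have "\<dots> = x" using per x by simp
    finally show "x \<in> orb f ((f ^^ j) d)" unfolding orb_def by blast
  qed
qed

lemma faces_orb: "faces E rho = orb (face_perm rho) ` darts E"
  by (simp add: faces_def orb_def)

lemma card_faces_le1:
  assumes per: "(face_perm rho ^^ L) d1 = d1" "L > 0"
  and cov: "\<And>d. d \<in> darts E \<Longrightarrow> \<exists>k. d = (face_perm rho ^^ k) d1"
  shows "card (faces E rho) \<le> 1"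
proof -
  have "faces E rho \<subseteq> {orb (face_perm rho) d1}"
  proof
    fix x assume "x \<in> faces E rho"
    then obtain d where "d \<in> darts E" "x = orb (face_perm rho) d" unfolding faces_orb by blast
    moreover obtain k where "d = (face_perm rho ^^ k) d1" using cov \<open>d \<in> darts E\<close> by blast
    ultimately show "x \<in> {orb (face_perm rho) d1}" using orb_same[OF per] by simp
  qed
  then have "card (faces E rho) \<le> card {orb (face_perm rho) d1}"
    by (intro card_mono) simp_all
  then show ?thesis by simp
qed

lemma card_faces_le2:
  assumes per: "(face_perm rho ^^ L) d1 = d1" "L > 0"
  and per2: "(face_perm rho ^^ L2) d2 = d2" "L2 > 0"
  and cov: "\<And>d. d \<in> darts E \<Longrightarrow> (\<exists>k. d = (face_perm rho ^^ k) d1) \<or> (\<exists>k. d = (face_perm rho ^^ k) d2)"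
  shows "card (faces E rho) \<le> 2"
proof -
  have "faces E rho \<subseteq> {orb (face_perm rho) d1, orb (face_perm rho) d2}"
  proof
    fix x assume "x \<in> faces E rho"
    then obtain d where "d \<in> darts E" "x = orb (face_perm rho) d" unfolding faces_orb by blast
    moreover have "(\<exists>k. d = (face_perm rho ^^ k) d1) \<or> (\<exists>k. d = (face_perm rho ^^ k) d2)"
      using cov \<open>d \<in> darts E\<close> by blast
    ultimately show "x \<in> {orb (face_perm rho) d1, orb (face_perm rho) d2}"
      using orb_same[OF per] orb_same[OF per2] by auto
  qed
  then have "card (faces E rho) \<le> card {orb (face_perm rho) d1, orb (face_perm rho) d2}"
    by (simp add: card_mono)
  also have "\<dots> \<le> 2" by (simp add: card_insert_if)
  finally show ?thesis .
qed

lemma max_genus_eq: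
  assumes fin: "finite (darts E)" and ne: "darts E \<noteq> {}"
  and g: "g = (1 - int (card V) + int (card E)) div 2"
  and ex: "rotation_system E rho" "embedding_genus V E rho \<ge> g"
  shows "max_genus V E = g"
proof -
  let ?S = "{embedding_genus V E rho | rho. rotation_system E rho}"
  have up: "embedding_genus V E r \<le> g" for r
  proof -
    have "faces E r \<noteq> {}" using ne by (simp add: faces_def)
    moreover have "finite (faces E r)" using fin by (simp add: faces_def)
    ultimately have "card (faces E r) \<ge> 1" by (simp add: Suc_leI card_gt_0_iff)
    then show ?thesis unfolding embedding_genus_def g by (intro zdiv_mono1) auto
  qed
  have lo: "embedding_genus V E r \<ge> (2 - int (card V) + int (card E) - int (card (darts E))) div 2" for r
  proof -
    have "card (faces E r) \<le> card (darts E)" using fin by (simp add: faces_def card_image_le)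
    then show ?thesis unfolding embedding_genus_def by (intro zdiv_mono1) auto
  qed
  have "?S \<subseteq> {(2 - int (card V) + int (card E) - int (card (darts E))) div 2 .. g}"
    using up lo by auto
  then have "finite ?S" by (rule finite_subset) simp
  moreover have "embedding_genus V E rho \<in> ?S" using ex by blast
  moreover have "g = embedding_genus V E rho" using up ex(2) by (simp add: order.antisym)
  ultimately show ?thesis unfolding max_genus_def
    using up ex by (intro Max_eqI) auto
qed


context
  fixes f :: "'a \<Rightarrow> 'a"
  assumes bf: "bij f"
begin

private lemma injf: "inj f" using bf by (simp add: bij_def)
private lemma invf: "f (inv f x) = x" using bf by (simp add: bij_def surj_f_inv_f)
private lemma finv: "inv f (f x) = x" using injf by simp

lemma iso_adj: "adj ((`) f ` E) x y \<longleftrightarrow> adj E (inv f x) (inv f y)"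
proof -
  have ii: "inj ((`) f)" using injf by (simp add: inj_image_eq_iff inj_def)
  have h: "{x, y} = f ` {inv f x, inv f y}" by (simp add: invf)
  have "({x,y} \<in> (`) f ` E) = ({inv f x, inv f y} \<in> E)"
    by (subst h) (rule inj_image_mem_iff[OF ii])
  moreover have "(x \<noteq> y) = (inv f x \<noteq> inv f y)" by (metis invf)
  ultimately show ?thesis by (simp add: adj_def)
qed

definition G :: "'a \<times> 'a \<Rightarrow> 'a \<times> 'a" where "G = map_prod f f"
definition Gi :: "'a \<times> 'a \<Rightarrow> 'a \<times> 'a" where "Gi = map_prod (inv f) (inv f)"

lemma G_Gi: "G (Gi d) = d" by (cases d) (simp add: G_def Gi_def invf)
lemma Gi_G: "Gi (G d) = d" by (cases d) (simp add: G_def Gi_def finv)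

lemma iso_darts: "d \<in> darts ((`) f ` E) \<longleftrightarrow> Gi d \<in> darts E"
  by (cases d) (simp add: darts_def Gi_def iso_adj)

definition conj :: "('a \<times> 'a \<Rightarrow> 'a \<times> 'a) \<Rightarrow> 'a \<times> 'a \<Rightarrow> 'a \<times> 'a" where
  "conj rho = (\<lambda>d. G (rho (Gi d)))"

lemma conj_pow: "(conj rho ^^ k) d = G ((rho ^^ k) (Gi d))"
  by (induction k arbitrary: d) (simp_all add: conj_def G_Gi Gi_G)

lemma iso_rot:
  assumes r: "rotation_system E rho"
  shows "rotation_system ((`) f ` E) (conj rho)"
proof -
  let ?E = "(`) f ` E"
  have b: "bij_betw rho (darts E) (darts E)" using r unfolding rotation_system_def by blast
  have fx: "\<And>d. d \<notin> darts E \<Longrightarrow> rho d = d" using r unfolding rotation_system_def by blast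
  have fs: "\<And>d. d \<in> darts E \<Longrightarrow> fst (rho d) = fst d" using r unfolding rotation_system_def by blast
  have tr: "\<And>d d'. d \<in> darts E \<Longrightarrow> d' \<in> darts E \<Longrightarrow> fst d = fst d' \<Longrightarrow> \<exists>k. (rho ^^ k) d = d'"
    using r unfolding rotation_system_def by blast
  have bG: "bij_betw G (darts E) (darts ?E)"
  proof (rule bij_betw_byWitness[where f'=Gi])
    show "\<forall>a\<in>darts E. Gi (G a) = a" by (simp add: Gi_G)
    show "\<forall>a'\<in>darts ?E. G (Gi a') = a'" by (simp add: G_Gi)
    show "G ` darts E \<subseteq> darts ?E" by (auto simp: iso_darts Gi_G)
    show "Gi ` darts ?E \<subseteq> darts E" by (auto simp: iso_darts)
  qed
  have bGi: "bij_betw Gi (darts ?E) (darts E)"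
  proof (rule bij_betw_byWitness[where f'=G])
    show "\<forall>a\<in>darts ?E. G (Gi a) = a" by (simp add: G_Gi)
    show "\<forall>a'\<in>darts E. Gi (G a') = a'" by (simp add: Gi_G)
    show "Gi ` darts ?E \<subseteq> darts E" by (auto simp: iso_darts)
    show "G ` darts E \<subseteq> darts ?E" by (auto simp: iso_darts Gi_G)
  qed
  have "bij_betw (G \<circ> rho \<circ> Gi) (darts ?E) (darts ?E)"
    by (intro bij_betw_trans[OF bGi] bij_betw_trans[OF b] bG)
  then have "bij_betw (conj rho) (darts ?E) (darts ?E)"
    by (simp add: conj_def comp_def)
  moreover have "\<forall>d. d \<notin> darts ?E \<longrightarrow> conj rho d = d"
    using fx by (simp add: conj_def iso_darts G_Gi)
  moreover have "\<forall>d\<in>darts ?E. fst (conj rho d) = fst d"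
  proof
    fix d assume "d \<in> darts ?E"
    then have "fst (rho (Gi d)) = fst (Gi d)" using fs iso_darts by blast
    then show "fst (conj rho d) = fst d"
      by (cases d, cases "rho (Gi d)") (simp add: conj_def G_def Gi_def invf)
  qed
  moreover have "\<forall>d\<in>darts ?E. \<forall>d'\<in>darts ?E. fst d = fst d' \<longrightarrow> (\<exists>k. (conj rho ^^ k) d = d')"
  proof (intro ballI impI)
    fix d d' assume a: "d \<in> darts ?E" "d' \<in> darts ?E" "fst d = fst d'"
    have "fst (Gi d) = fst (Gi d')" using a(3) by (cases d, cases d') (simp add: Gi_def)
    then obtain k where "(rho ^^ k) (Gi d) = Gi d'" using tr a iso_darts by blast
    then have "(conj rho ^^ k) d = d'" by (simp add: conj_pow G_Gi)
    then show "\<exists>k. (conj rho ^^ k) d = d'" by blast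
  qed
  ultimately show ?thesis unfolding rotation_system_def by blast
qed

lemma conj_fp: "face_perm (conj rho) = (\<lambda>d. G (face_perm rho (Gi d)))"
  by (rule ext) (auto simp: face_perm_def conj_def Gi_def split: prod.splits)

lemma fp_pow: "(face_perm (conj rho) ^^ k) d = G ((face_perm rho ^^ k) (Gi d))"
  by (induction k arbitrary: d) (simp_all add: conj_fp G_Gi Gi_G)

lemma iso_faces: "faces ((`) f ` E) (conj rho) = (`) G ` faces E rho"
proof -
  have "darts ((`) f ` E) = G ` darts E"
    by (auto simp: iso_darts Gi_G) (metis G_Gi image_eqI)
  moreover have "{(face_perm (conj rho) ^^ k) (G d) |k. True} = G ` {(face_perm rho ^^ k) d |k. True}" for d
    by (auto simp: fp_pow Gi_G)
  ultimately show ?thesis unfolding faces_def by (auto simp: image_image)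
qed

lemma iso_card_faces: "card (faces ((`) f ` E) (conj rho)) = card (faces E rho)"
proof -
  have "inj G" by (metis Gi_G injI)
  then have "inj ((`) G)" by (simp add: inj_image_eq_iff inj_def)
  then show ?thesis by (simp add: iso_faces card_image inj_on_subset)
qed

lemma iso_card_E: "card ((`) f ` E) = card E"
proof -
  have "inj ((`) f)" using injf by (simp add: inj_image_eq_iff inj_def)
  then show ?thesis by (simp add: card_image inj_on_subset)
qed

lemma iso_genus_sub:
  "{embedding_genus V E rho | rho. rotation_system E rho} \<subseteq>
   {embedding_genus (f ` V) ((`) f ` E) rho | rho. rotation_system ((`) f ` E) rho}"
proof
  fix x assume "x \<in> {embedding_genus V E rho | rho. rotation_system E rho}"
  then obtain rho where "rotation_system E rho" "x = embedding_genus V E rho" by blast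
  moreover have "card (f ` V) = card V" using injf by (simp add: card_image inj_on_subset)
  ultimately have "x = embedding_genus (f ` V) ((`) f ` E) (conj rho)"
    by (simp add: embedding_genus_def iso_card_faces iso_card_E)
  then show "x \<in> {embedding_genus (f ` V) ((`) f ` E) rho | rho. rotation_system ((`) f ` E) rho}"
    using iso_rot \<open>rotation_system E rho\<close> by blast
qed

lemma iso_conn:
  assumes "graph_connected V E"
  shows "graph_connected (f ` V) ((`) f ` E)"
proof -
  have p: "(f a, f b) \<in> {(x, y). adj ((`) f ` E) x y}\<^sup>*" if "(a, b) \<in> {(x, y). adj E x y}\<^sup>*" for a b
    using that
  proof (induction rule: rtrancl_induct)
    case base then show ?case by simp
  next
    case (step y z)
    then have "adj ((`) f ` E) (f y) (f z)" by (simp add: iso_adj finv)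
    then show ?case using step by (meson case_prodI mem_Collect_eq rtrancl.rtrancl_into_rtrancl)
  qed
  show ?thesis using assms p unfolding graph_connected_def by blast
qed

lemma iso_del_E: "del_vertex_E ((`) f ` E) (f v) = (`) f ` del_vertex_E E v"
  using injf by (auto simp: del_vertex_E_def inj_image_mem_iff[OF injf] inj_eq[OF injf])

lemma iso_del_V: "del_vertex_V (f ` V) (f v) = f ` del_vertex_V V v"
  using injf by (auto simp: del_vertex_V_def inj_image_mem_iff[OF injf] inj_eq[OF injf])

end

lemma iso_max_genus:
  fixes f :: "'a \<Rightarrow> 'a"
  assumes bf: "bij f"
  shows "max_genus (f ` V) ((`) f ` E) = max_genus V E"
proof -
  have bi: "bij (inv f)" using bf by (simp add: bij_imp_bij_inv)
  have e1: "inv f ` f ` V = V" using bf by (simp add: bij_is_inj image_inv_f_f)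
  have e2: "(`) (inv f) ` (`) f ` E = E"
    using bf by (simp add: image_image bij_is_inj image_inv_f_f)
  have "{embedding_genus V E rho | rho. rotation_system E rho} =
        {embedding_genus (f ` V) ((`) f ` E) rho | rho. rotation_system ((`) f ` E) rho}"
    using iso_genus_sub[OF bf, of V E] iso_genus_sub[OF bi, of "f ` V" "(`) f ` E"] e1 e2 by simp
  then show ?thesis by (simp add: max_genus_def)
qed


definition nx :: "nat \<Rightarrow> nat \<Rightarrow> nat" where "nx n u = (if u = 2*n - 1 then 0 else u + 1)"
definition pv :: "nat \<Rightarrow> nat \<Rightarrow> nat" where "pv n u = (if u = 0 then 2*n - 1 else u - 1)"
definition opp :: "nat \<Rightarrow> nat \<Rightarrow> nat" where "opp n u = (if u < n then u + n else u - n)"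

definition R0 :: "nat \<Rightarrow> nat \<Rightarrow> nat \<Rightarrow> nat" where
  "R0 n u v = (if v = pv n u then opp n u else if v = opp n u then nx n u else pv n u)"
definition R1 :: "nat \<Rightarrow> nat \<Rightarrow> nat \<Rightarrow> nat" where
  "R1 n u v = (if v = nx n u then opp n u else if v = opp n u then pv n u else nx n u)"
definition RM :: "nat \<Rightarrow> nat \<Rightarrow> nat \<Rightarrow> nat" where
  "RM n u v = (if u = 0 \<and> odd n then R1 n u v else R0 n u v)"
definition RD :: "nat \<Rightarrow> nat \<Rightarrow> nat \<Rightarrow> nat" where
  "RD n u v = (if R0 n u v = 0 then R0 n u 0 else R0 n u v)"

context fixes n :: nat assumes n2: "2 \<le> n"
begin

lemma nx_lt[simp]: "u < 2*n \<Longrightarrow> nx n u < 2*n" using n2 by (auto simp: nx_def)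
lemma pv_lt[simp]: "u < 2*n \<Longrightarrow> pv n u < 2*n" using n2 by (auto simp: pv_def)
lemma opp_lt[simp]: "u < 2*n \<Longrightarrow> opp n u < 2*n" using n2 by (auto simp: opp_def)
lemma pv_nx[simp]: "u < 2*n \<Longrightarrow> pv n (nx n u) = u" using n2 by (auto simp: nx_def pv_def)
lemma nx_pv[simp]: "u < 2*n \<Longrightarrow> nx n (pv n u) = u" using n2 by (auto simp: nx_def pv_def)
lemma opp_opp[simp]: "u < 2*n \<Longrightarrow> opp n (opp n u) = u" using n2 by (auto simp: opp_def)
lemma nx_ne_pv[simp]: "u < 2*n \<Longrightarrow> nx n u \<noteq> pv n u" using n2 by (auto simp: nx_def pv_def)
lemma nx_ne_opp[simp]: "u < 2*n \<Longrightarrow> nx n u \<noteq> opp n u" using n2 by (auto simp: nx_def opp_def)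
lemma pv_ne_opp[simp]: "u < 2*n \<Longrightarrow> pv n u \<noteq> opp n u" using n2 by (auto simp: pv_def opp_def)
lemma nx_ne[simp]: "u < 2*n \<Longrightarrow> nx n u \<noteq> u" using n2 by (auto simp: nx_def)
lemma pv_ne[simp]: "u < 2*n \<Longrightarrow> pv n u \<noteq> u" using n2 by (auto simp: pv_def)
lemma opp_ne[simp]: "u < 2*n \<Longrightarrow> opp n u \<noteq> u" using n2 by (auto simp: opp_def)

lemma pv_ne_nx[simp]: "u < 2*n \<Longrightarrow> pv n u \<noteq> nx n u" using nx_ne_pv by metis
lemma opp_ne_nx[simp]: "u < 2*n \<Longrightarrow> opp n u \<noteq> nx n u" using nx_ne_opp by metis
lemma opp_ne_pv[simp]: "u < 2*n \<Longrightarrow> opp n u \<noteq> pv n u" using pv_ne_opp by metis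

lemma smod: "i < 2*n \<Longrightarrow> Suc i mod (2*n) = nx n i"
  by (cases "i = 2*n - 1") (auto simp: nx_def)

lemma adjM: "adj (mobius_E n) u w \<longleftrightarrow> u < 2*n \<and> (w = nx n u \<or> w = pv n u \<or> w = opp n u)"
proof
  assume a: "adj (mobius_E n) u w"
  then have ne: "u \<noteq> w" and m: "{u, w} \<in> mobius_E n" by (auto simp: adj_def)
  from m have "(\<exists>i. i < 2*n \<and> {u,w} = {i, Suc i mod (2*n)}) \<or> (\<exists>i. i < n \<and> {u,w} = {i, i+n})"
    unfolding mobius_E_def by blast
  then consider (c) i where "i < 2*n" "{u,w} = {i, nx n i}" | (r) i where "i < n" "{u,w} = {i, i+n}"
    using smod by metis
  then show "u < 2*n \<and> (w = nx n u \<or> w = pv n u \<or> w = opp n u)"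
  proof cases
    case c
    then have "(u = i \<and> w = nx n i) \<or> (u = nx n i \<and> w = i)" by (simp add: doubleton_eq_iff)
    then show ?thesis
    proof
      assume "u = i \<and> w = nx n i" then show ?thesis using c by simp
    next
      assume h: "u = nx n i \<and> w = i"
      then have "pv n u = i" using c by simp
      then show ?thesis using h c by simp
    qed
  next
    case r
    then have "(u = i \<and> w = i + n) \<or> (u = i + n \<and> w = i)" by (simp add: doubleton_eq_iff)
    then show ?thesis using r by (auto simp: opp_def)
  qed
next
  assume a: "u < 2*n \<and> (w = nx n u \<or> w = pv n u \<or> w = opp n u)"
  then have "u \<noteq> w" by (metis nx_ne pv_ne opp_ne)
  moreover have "{u, w} \<in> mobius_E n"
  proof -
    have "w = nx n u \<Longrightarrow> ?thesis"
    proof -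
      assume w: "w = nx n u"
      have "{u, w} = {u, Suc u mod (2*n)}" using a w smod[of u] by simp
      then show ?thesis using a unfolding mobius_E_def by blast
    qed
    moreover have "w = pv n u \<Longrightarrow> ?thesis"
    proof -
      assume w: "w = pv n u"
      have "Suc (pv n u) mod (2*n) = u" using a smod[of "pv n u"] by simp
      then have "{u, w} = {pv n u, Suc (pv n u) mod (2*n)}" using w by auto
      moreover have "pv n u < 2*n" using a by simp
      ultimately show ?thesis unfolding mobius_E_def by blast
    qed
    moreover have "w = opp n u \<Longrightarrow> ?thesis"
    proof -
      assume w: "w = opp n u"
      show ?thesis
      proof (cases "u < n")
        case True
        then have "{u, w} = {u, u + n}" using w by (simp add: opp_def)
        then show ?thesis using True unfolding mobius_E_def by blast
      next
        case False
        then have "{u, w} = {u - n, u - n + n}" using w by (auto simp: opp_def)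
        moreover have "u - n < n" using a False by linarith
        ultimately show ?thesis unfolding mobius_E_def by blast
      qed
    qed
    ultimately show ?thesis using a by blast
  qed
  ultimately show "adj (mobius_E n) u w" by (simp add: adj_def)
qed

lemma adjM_lt2: "adj (mobius_E n) u w \<Longrightarrow> w < 2*n"
  by (auto simp: adjM)

lemma adjM_sym: "adj (mobius_E n) u w \<Longrightarrow> adj (mobius_E n) w u"
  by (auto simp: adj_def insert_commute)

definition ED :: "nat set set" where "ED = del_vertex_E (mobius_E n) 0"

lemma adjD: "adj ED u w \<longleftrightarrow> adj (mobius_E n) u w \<and> u \<noteq> 0 \<and> w \<noteq> 0"
  by (auto simp: ED_def del_vertex_E_def adj_def)

lemma finite_dartsM: "finite (darts (mobius_E n))"
proof -
  have "darts (mobius_E n) \<subseteq> {0..<2*n} \<times> {0..<2*n}"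
    by (auto simp: darts_def adjM)
  then show ?thesis by (rule finite_subset) simp
qed

lemma finite_dartsD: "finite (darts ED)"
proof -
  have "darts ED \<subseteq> darts (mobius_E n)" by (auto simp: darts_def adjD)
  then show ?thesis using finite_dartsM by (rule finite_subset)
qed


lemma R0_pv[simp]: "u < 2*n \<Longrightarrow> R0 n u (pv n u) = opp n u" by (simp add: R0_def)
lemma R0_opp[simp]: "u < 2*n \<Longrightarrow> R0 n u (opp n u) = nx n u"
  using pv_ne_opp[of u] by (auto simp: R0_def)
lemma R0_nx[simp]: "u < 2*n \<Longrightarrow> R0 n u (nx n u) = pv n u"
  using nx_ne_opp[of u] nx_ne_pv[of u] by (auto simp: R0_def)
lemma R1_nx[simp]: "u < 2*n \<Longrightarrow> R1 n u (nx n u) = opp n u" by (simp add: R1_def)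
lemma R1_opp[simp]: "u < 2*n \<Longrightarrow> R1 n u (opp n u) = pv n u"
  using nx_ne_opp[of u] by (auto simp: R1_def)
lemma R1_pv[simp]: "u < 2*n \<Longrightarrow> R1 n u (pv n u) = nx n u"
  using pv_ne_opp[of u] nx_ne_pv[of u] by (auto simp: R1_def)

lemma R0_0a: "u < 2*n \<Longrightarrow> pv n u = 0 \<Longrightarrow> R0 n u 0 = opp n u" by (metis R0_pv)
lemma R0_0b: "u < 2*n \<Longrightarrow> opp n u = 0 \<Longrightarrow> R0 n u 0 = nx n u" by (metis R0_opp)
lemma R0_0c: "u < 2*n \<Longrightarrow> nx n u = 0 \<Longrightarrow> R0 n u 0 = pv n u" by (metis R0_nx)

lemma nbrM: "adj (mobius_E n) u v \<Longrightarrow> u < 2*n \<and> (v = nx n u \<or> v = pv n u \<or> v = opp n u)"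
  by (simp add: adjM)

lemma three_k: "w = v \<or> w = f v \<or> w = f (f v) \<Longrightarrow> \<exists>k. (f ^^ k) v = w"
proof -
  assume "w = v \<or> w = f v \<or> w = f (f v)"
  moreover have "(f ^^ 0) v = v" "(f ^^ 1) v = f v" "(f ^^ 2) v = f (f v)"
    by (simp_all add: numeral_2_eq_2)
  ultimately show ?thesis by metis
qed

lemma rotM: "rotation_system (mobius_E n) (rotR (mobius_E n) (RM n))"
proof (rule rot_generic[OF finite_dartsM])
  fix u v assume "adj (mobius_E n) u v"
  then have "u < 2*n" "v = nx n u \<or> v = pv n u \<or> v = opp n u" by (simp_all add: adjM)
  then show "adj (mobius_E n) u (RM n u v)" by (auto simp: adjM RM_def)
next
  fix u v w assume "adj (mobius_E n) u v" "adj (mobius_E n) u w" "RM n u v = RM n u w"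
  then have "u < 2*n" "v = nx n u \<or> v = pv n u \<or> v = opp n u"
    "w = nx n u \<or> w = pv n u \<or> w = opp n u" "RM n u v = RM n u w" by (simp_all add: adjM)
  then show "v = w" by (auto simp: RM_def split: if_splits)
next
  fix u v w assume "adj (mobius_E n) u v" "adj (mobius_E n) u w"
  then have "u < 2*n" "v = nx n u \<or> v = pv n u \<or> v = opp n u"
    "w = nx n u \<or> w = pv n u \<or> w = opp n u" by (simp_all add: adjM)
  then have "w = v \<or> w = RM n u v \<or> w = RM n u (RM n u v)" by (auto simp: RM_def split: if_splits)
  then show "\<exists>k. (RM n u ^^ k) v = w" by (rule three_k)
qed

lemma atmost1zero: "u < 2*n \<Longrightarrow> (nx n u = 0 \<longrightarrow> pv n u \<noteq> 0 \<and> opp n u \<noteq> 0) \<and> (pv n u = 0 \<longrightarrow> opp n u \<noteq> 0)"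
  by (metis nx_ne_pv nx_ne_opp pv_ne_opp)

lemma rotD: "rotation_system ED (rotR ED (RD n))"
proof (rule rot_generic[OF finite_dartsD])
  fix u v assume "adj ED u v"
  then have "u < 2*n" "u \<noteq> 0" "v \<noteq> 0" "v = nx n u \<or> v = pv n u \<or> v = opp n u" by (simp_all add: adjD adjM)
  then show "adj ED u (RD n u v)" using atmost1zero[of u]
    by (auto simp: adjD adjM RD_def R0_0a R0_0b R0_0c)
next
  fix u v w assume "adj ED u v" "adj ED u w" "RD n u v = RD n u w"
  then have "u < 2*n" "v \<noteq> 0" "w \<noteq> 0" "v = nx n u \<or> v = pv n u \<or> v = opp n u"
    "w = nx n u \<or> w = pv n u \<or> w = opp n u" "RD n u v = RD n u w" by (simp_all add: adjD adjM)
  then show "v = w" using atmost1zero[of u]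
    by (auto simp: RD_def R0_0a R0_0b R0_0c split: if_splits)
next
  fix u v w assume "adj ED u v" "adj ED u w"
  then have "u < 2*n" "v \<noteq> 0" "w \<noteq> 0" "v = nx n u \<or> v = pv n u \<or> v = opp n u"
    "w = nx n u \<or> w = pv n u \<or> w = opp n u" by (simp_all add: adjD adjM)
  then have "w = v \<or> w = RD n u v \<or> w = RD n u (RD n u v)" using atmost1zero[of u]
    by (auto simp: RD_def R0_0a R0_0b R0_0c)
  then show "\<exists>k. (RD n u ^^ k) v = w" by (rule three_k)
qed

end


context fixes n :: nat assumes n2: "2 \<le> n"
begin

abbreviation "EM \<equiv> mobius_E n"
abbreviation "fM \<equiv> face_perm (rotR EM (RM n))"

lemma fM_step: "adj EM a b \<Longrightarrow> fM (a,b) = (b, RM n b a)"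
  using adjM_sym[OF n2] by (simp add: face_perm_def rotR_simp)

lemma stepM_nx: "a < 2*n \<Longrightarrow> even n \<or> nx n a \<noteq> 0 \<Longrightarrow> fM (a, nx n a) = (nx n a, opp n (nx n a))"
proof -
  assume a: "a < 2*n" "even n \<or> nx n a \<noteq> 0"
  have "R0 n (nx n a) a = opp n (nx n a)"
    using R0_pv[OF n2, of "nx n a"] pv_nx[OF n2 a(1)] nx_lt[OF n2 a(1)] by simp
  then show ?thesis using a n2 by (subst fM_step) (auto simp: adjM RM_def)
qed

lemma stepM_opp: "a < 2*n \<Longrightarrow> even n \<or> opp n a \<noteq> 0 \<Longrightarrow> fM (a, opp n a) = (opp n a, nx n (opp n a))"
proof -
  assume a: "a < 2*n" "even n \<or> opp n a \<noteq> 0"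
  have "R0 n (opp n a) a = nx n (opp n a)"
    using R0_opp[OF n2, of "opp n a"] opp_opp[OF n2 a(1)] opp_lt[OF n2 a(1)] by simp
  then show ?thesis using a n2 by (subst fM_step) (auto simp: adjM RM_def)
qed

lemma stepM_pv: "a < 2*n \<Longrightarrow> even n \<or> pv n a \<noteq> 0 \<Longrightarrow> fM (a, pv n a) = (pv n a, pv n (pv n a))"
proof -
  assume a: "a < 2*n" "even n \<or> pv n a \<noteq> 0"
  have "R0 n (pv n a) a = pv n (pv n a)"
    using R0_nx[OF n2, of "pv n a"] nx_pv[OF n2 a(1)] pv_lt[OF n2 a(1)] by simp
  then show ?thesis using a n2 by (subst fM_step) (auto simp: adjM RM_def)
qed

lemma flip1: "odd n \<Longrightarrow> fM (2*n - 1, 0) = (0, 1)"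
proof -
  assume o: "odd n"
  have "adj EM (2*n-1) 0" using n2 by (simp add: adjM nx_def)
  moreover have "R1 n 0 (2*n-1) = 1" using n2 by (auto simp: R1_def nx_def pv_def opp_def)
  ultimately show ?thesis using o by (simp add: fM_step RM_def)
qed

lemma flip2: "odd n \<Longrightarrow> fM (n, 0) = (0, 2*n-1)"
proof -
  assume o: "odd n"
  have "adj EM n 0" using n2 by (simp add: adjM opp_def)
  moreover have "R1 n 0 n = 2*n-1" using n2 by (simp add: R1_def nx_def pv_def opp_def)
  ultimately show ?thesis using o by (simp add: fM_step RM_def)
qed

lemma flip3: "odd n \<Longrightarrow> fM (1, 0) = (0, n)"
proof -
  assume o: "odd n"
  have "adj EM 1 0" using n2 by (simp add: adjM pv_def)
  moreover have "R1 n 0 1 = n" using n2 by (simp add: R1_def nx_def pv_def opp_def)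
  ultimately show ?thesis using o by (simp add: fM_step RM_def)
qed

lemma fpow_Suc: "(f ^^ Suc k) d = f ((f ^^ k) d)" by simp
lemma fpow_p1: "(f ^^ (k + 1)) d = f ((f ^^ k) d)" by simp

lemma pv_pow0: "i \<le> 2*n \<Longrightarrow> (pv n ^^ i) 0 = (if i = 0 then 0 else 2*n - i)"
proof (induction i)
  case 0 then show ?case by simp
next
  case (Suc i) then show ?case using n2 by (auto simp: pv_def)
qed


lemma oddj: "odd x \<Longrightarrow> x < 2*n \<Longrightarrow> nx n (2*(x div 2)) = x"
  by (auto simp: nx_def elim!: oddE)
lemma evenj: "even (x::nat) \<Longrightarrow> 2*(x div 2) = x" by auto
lemma opp_par: "even n \<Longrightarrow> u < 2*n \<Longrightarrow> odd (opp n u) \<longleftrightarrow> odd u"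
  by (auto simp: opp_def)

lemma f4: "(f ^^ 4) d = f (f (f (f d)))" by (simp add: eval_nat_numeral)
lemma f3: "(f ^^ 3) d = f (f (f d))" by (simp add: eval_nat_numeral)
lemma f2: "(f ^^ 2) d = f (f d)" by (simp add: eval_nat_numeral)

lemma Ev1: "even n \<Longrightarrow> a < 2*n \<Longrightarrow> fM (a, nx n a) = (nx n a, opp n (nx n a))"
  by (simp add: stepM_nx)
lemma Ev2: "even n \<Longrightarrow> a < 2*n \<Longrightarrow> fM (a, opp n a) = (opp n a, nx n (opp n a))"
  by (simp add: stepM_opp)
lemma Ev3: "even n \<Longrightarrow> a < 2*n \<Longrightarrow> fM (a, pv n a) = (pv n a, pv n (pv n a))"
  by (simp add: stepM_pv)

lemma EvG: "even n \<Longrightarrow> j + 1 < n \<Longrightarrow> opp n (nx n (opp n (nx n (2*j)))) = 2*(Suc j)"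
  using n2 by (auto simp: nx_def opp_def elim!: evenE)

lemma EvE1: "even n \<Longrightarrow> j < n \<Longrightarrow> (fM ^^ (4*j)) (0,1) = (2*j, nx n (2*j))"
proof (induction j)
  case 0 then show ?case using n2 by (simp add: nx_def)
next
  case (Suc j)
  have "(fM ^^ (4*Suc j)) (0,1) = (fM ^^ 4) ((fM ^^ (4*j)) (0,1))"
    by (simp only: mult_Suc_right funpow_apply_add)
  also have "\<dots> = (fM ^^ 4) (2*j, nx n (2*j))" using Suc by simp
  also have "\<dots> = (opp n (nx n (opp n (nx n (2*j)))), nx n (opp n (nx n (opp n (nx n (2*j))))))"
    using Suc n2 by (simp add: f4 Ev1 Ev2)
  also have "\<dots> = (2*Suc j, nx n (2 * Suc j))" using EvG Suc by simp
  finally show ?case .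
qed


lemma pv_pow_lt: "(pv n ^^ i) 0 < 2*n"
  by (induction i) (use n2 in auto)

lemma EvPer: "even n \<Longrightarrow> (fM ^^ (4*n)) (0,1) = (0,1)"
proof -
  assume e: "even n"
  have "4*n = 4 + 4*(n-1)" using n2 by simp
  then have "(fM ^^ (4*n)) (0,1) = (fM ^^ 4) ((fM ^^ (4*(n-1))) (0,1))"
    by (simp only: funpow_apply_add)
  also have "\<dots> = (fM ^^ 4) (2*(n-1), nx n (2*(n-1)))" using EvE1[OF e, of "n-1"] n2 by simp
  also have "\<dots> = (opp n (nx n (opp n (nx n (2*(n-1))))), nx n (opp n (nx n (opp n (nx n (2*(n-1)))))))"
    using e n2 by (simp add: f4 Ev1 Ev2)
  also have "\<dots> = (0,1)"
  proof -
    have "nx n (2*(n-1)) = 2*n-1" using n2 by (auto simp: nx_def)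
    moreover have "opp n (2*n-1) = n-1" using n2 by (auto simp: opp_def)
    moreover have "nx n (n-1) = n" using n2 by (auto simp: nx_def)
    moreover have "opp n n = 0" by (simp add: opp_def)
    moreover have "nx n 0 = 1" using n2 by (simp add: nx_def)
    ultimately show ?thesis by simp
  qed
  finally show ?thesis .
qed

lemma EvP: "even n \<Longrightarrow> (fM ^^ i) (0, pv n 0) = ((pv n ^^ i) 0, pv n ((pv n ^^ i) 0))"
proof (induction i)
  case 0 then show ?case by simp
next
  case (Suc i) then show ?case using pv_pow_lt[of i] by (simp add: Ev3)
qed

lemma EvPPer: "even n \<Longrightarrow> (fM ^^ (2*n)) (0, pv n 0) = (0, pv n 0)"
  using EvP pv_pow0[of "2*n"] n2 by simp

lemma EvK: assumes e: "even n" and j: "j < n"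
  shows "(fM ^^ (4*j+1)) (0,1) = (nx n (2*j), opp n (nx n (2*j)))"
    "(fM ^^ (4*j+2)) (0,1) = (opp n (nx n (2*j)), nx n (opp n (nx n (2*j))))"
    "(fM ^^ (4*j+3)) (0,1) = (nx n (opp n (nx n (2*j))), opp n (nx n (opp n (nx n (2*j)))))"
proof -
  have b: "(fM ^^ (4*j)) (0,1) = (2*j, nx n (2*j))" using EvE1 e j by simp
  have l: "2*j < 2*n" using j by simp
  have l2: "nx n (2*j) < 2*n" using nx_lt[OF n2 l] .
  have l3: "opp n (nx n (2*j)) < 2*n" using opp_lt[OF n2 l2] .
  have s1: "fM (2*j, nx n (2*j)) = (nx n (2*j), opp n (nx n (2*j)))" by (rule Ev1[OF e l])
  have s2: "fM (nx n (2*j), opp n (nx n (2*j))) = (opp n (nx n (2*j)), nx n (opp n (nx n (2*j))))"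
    by (rule Ev2[OF e l2])
  have s3: "fM (opp n (nx n (2*j)), nx n (opp n (nx n (2*j)))) = (nx n (opp n (nx n (2*j))), opp n (nx n (opp n (nx n (2*j)))))"
    by (rule Ev1[OF e l3])
  have p1: "(fM ^^ (4*j+1)) (0,1) = fM ((fM ^^ (4*j)) (0,1))"
    using fpow_p1[where f=fM and k="4*j" and d="(0,1)"] by (simp only: add.assoc numeral_plus_one one_plus_numeral semiring_norm)
  have p2: "(fM ^^ (4*j+2)) (0,1) = fM ((fM ^^ (4*j+1)) (0,1))"
    using fpow_p1[where f=fM and k="4*j+1" and d="(0,1)"] by (simp only: add.assoc numeral_plus_one one_plus_numeral semiring_norm)
  have p3: "(fM ^^ (4*j+3)) (0,1) = fM ((fM ^^ (4*j+2)) (0,1))"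
    using fpow_p1[where f=fM and k="4*j+2" and d="(0,1)"] by (simp only: add.assoc numeral_plus_one one_plus_numeral semiring_norm)
  show q1: "(fM ^^ (4*j+1)) (0,1) = (nx n (2*j), opp n (nx n (2*j)))"
    unfolding p1 b by (rule s1)
  show q2: "(fM ^^ (4*j+2)) (0,1) = (opp n (nx n (2*j)), nx n (opp n (nx n (2*j))))"
    unfolding p2 q1 by (rule s2)
  show "(fM ^^ (4*j+3)) (0,1) = (nx n (opp n (nx n (2*j))), opp n (nx n (opp n (nx n (2*j)))))"
    unfolding p3 q2 by (rule s3)
qed

lemma EvCov: assumes e: "even n" and d: "d \<in> darts EM"
  shows "(\<exists>k. d = (fM ^^ k) (0,1)) \<or> (\<exists>k. d = (fM ^^ k) (0, pv n 0))"
proof -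
  obtain u w where uw: "d = (u,w)" "u < 2*n" "w = nx n u \<or> w = pv n u \<or> w = opp n u"
    using d n2 by (cases d) (auto simp: darts_def adjM)
  consider "w = nx n u" | "w = pv n u" | "w = opp n u" using uw by blast
  then show ?thesis
  proof cases
    case 1
    show ?thesis
    proof (cases "even u")
      case True
      have "(fM ^^ (4*(u div 2))) (0,1) = (u, nx n u)" using EvE1[OF e, of "u div 2"] uw True
        by (simp add: evenj)
      then show ?thesis using uw 1 by metis
    next
      case False
      let ?x = "opp n u"
      have ox: "odd ?x" "?x < 2*n" using opp_par[OF e uw(2)] False uw(2) n2 by auto
      have j: "?x div 2 < n" using ox by simp
      have "(fM ^^ (4*(?x div 2)+2)) (0,1) = (opp n ?x, nx n (opp n ?x))"
        using EvK(2)[OF e j] unfolding oddj[OF ox] .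
      then have "(fM ^^ (4*(?x div 2)+2)) (0,1) = (u, nx n u)" using uw(2) n2 by simp
      then show ?thesis using uw 1 by metis
    qed
  next
    case 2
    define k where "k = (if u = 0 then 0 else 2*n - u)"
    have "(pv n ^^ k) 0 = u" using pv_pow0[of k] uw(2) by (auto simp: k_def)
    then have "(fM ^^ k) (0, pv n 0) = (u, pv n u)" using EvP[OF e, of k] by simp
    then show ?thesis using uw 2 by metis
  next
    case 3
    show ?thesis
    proof (cases "odd u")
      case True
      have j: "u div 2 < n" using uw(2) by simp
      have "(fM ^^ (4*(u div 2)+1)) (0,1) = (u, opp n u)"
        using EvK(1)[OF e j] unfolding oddj[OF True uw(2)] .
      then show ?thesis using uw 3 by metis
    next
      case False
      let ?x = "opp n (pv n u)"
      have pu: "odd (pv n u)" "pv n u < 2*n" using False uw(2) n2 by (auto simp: pv_def)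
      have ox: "odd ?x" "?x < 2*n" using opp_par[OF e pu(2)] pu n2 by auto
      have j: "?x div 2 < n" using ox by simp
      have "(fM ^^ (4*(?x div 2)+3)) (0,1) = (nx n (opp n ?x), opp n (nx n (opp n ?x)))"
        using EvK(3)[OF e j] unfolding oddj[OF ox] .
      then have "(fM ^^ (4*(?x div 2)+3)) (0,1) = (u, opp n u)" using uw(2) pu n2 by simp
      then show ?thesis using uw 3 by metis
    qed
  qed
qed

lemma EvFaces: "even n \<Longrightarrow> card (faces EM (rotR EM (RM n))) \<le> 2"
  by (rule card_faces_le2[OF EvPer _ EvPPer _ EvCov]) (use n2 in auto)

end


context fixes n m :: nat assumes n2: "2 \<le> n" and nm: "n = 2*m+1"
begin

lemma m1: "1 \<le> m" using n2 nm by simp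
lemma on: "odd n" using nm by simp

lemma witness: "(fM n ^^ k) d = (a, b) \<Longrightarrow> a = u \<Longrightarrow> b = w \<Longrightarrow> \<exists>k. (u, w) = (fM n ^^ k) d"
  by metis

lemma p1: "(f ^^ (k+1)) d = f ((f ^^ k) d)" by simp
lemma p2: "(f ^^ (k+2)) d = f (f ((f ^^ k) d))" by (simp add: numeral_2_eq_2)
lemma p3: "(f ^^ (k+3)) d = f (f (f ((f ^^ k) d)))" by (simp add: numeral_3_eq_3)
lemma pk2: "(f ^^ (k+2)) d = f ((f ^^ (k+1)) d)" by (simp add: numeral_2_eq_2)
lemma pk3: "(f ^^ (k+3)) d = f ((f ^^ (k+2)) d)" by (simp add: numeral_3_eq_3 numeral_2_eq_2)
lemma p4: "(f ^^ (k+4)) d = f (f (f (f ((f ^^ k) d))))" by (simp add: eval_nat_numeral)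

lemma A1: "j < m \<Longrightarrow> nx n (2*j) = 2*j+1 \<and> opp n (2*j+1) = 2*j+1+n \<and> nx n (2*j+1+n) = 2*j+2+n
   \<and> opp n (2*j+2+n) = 2*j+2 \<and> nx n (2*j+2) = 2*j+3"
  using nm by (auto simp: nx_def opp_def)

lemma Z1: "j \<le> m \<Longrightarrow> (fM n ^^ (4*j)) (0,1) = (2*j, 2*j+1)"
proof (induction j)
  case 0 then show ?case by simp
next
  case (Suc j)
  then have j: "j < m" by simp
  note a = A1[OF j]
  have l: "2*j < 2*n" "2*j+1 < 2*n" "2*j+1+n < 2*n" "2*j+2+n < 2*n" using j nm by auto
  have "(fM n ^^ (4*j+4)) (0,1) = fM n (fM n (fM n (fM n (2*j, 2*j+1))))"
    using Suc j by (simp only: p4; simp)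
  also have "fM n (2*j, 2*j+1) = (2*j+1, 2*j+1+n)"
    using stepM_nx[OF n2 l(1)] a by simp
  also have "fM n (2*j+1, 2*j+1+n) = (2*j+1+n, 2*j+2+n)"
    using stepM_opp[OF n2 l(2)] a by simp
  also have "fM n (2*j+1+n, 2*j+2+n) = (2*j+2+n, 2*j+2)"
    using stepM_nx[OF n2 l(3)] a by simp
  also have "fM n (2*j+2+n, 2*j+2) = (2*j+2, 2*j+3)"
    using stepM_opp[OF n2 l(4)] a by simp
  finally show ?case by (simp add: algebra_simps)
qed


lemma Z1K: assumes j: "j < m"
  shows "(fM n ^^ (4*j+1)) (0,1) = (2*j+1, 2*j+1+n)"
    "(fM n ^^ (4*j+2)) (0,1) = (2*j+1+n, 2*j+2+n)"
    "(fM n ^^ (4*j+3)) (0,1) = (2*j+2+n, 2*j+2)"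
proof -
  note a = A1[OF j]
  have l: "2*j < 2*n" "2*j+1 < 2*n" "2*j+1+n < 2*n" "2*j+2+n < 2*n" using j nm by auto
  have b: "(fM n ^^ (4*j)) (0,1) = (2*j, 2*j+1)" using Z1 j by simp
  show q1: "(fM n ^^ (4*j+1)) (0,1) = (2*j+1, 2*j+1+n)"
    using stepM_nx[OF n2 l(1)] a b by (simp only: p1) simp
  show q2: "(fM n ^^ (4*j+2)) (0,1) = (2*j+1+n, 2*j+2+n)"
    using stepM_opp[OF n2 l(2)] a q1 by (simp only: pk2 pk3) simp
  show "(fM n ^^ (4*j+3)) (0,1) = (2*j+2+n, 2*j+2)"
    using stepM_nx[OF n2 l(3)] a q2 by (simp only: pk2 pk3) simp
qed

lemma Z1end: "(fM n ^^ (4*m+1)) (0,1) = (n, 0)"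
proof -
  have b: "(fM n ^^ (4*m)) (0,1) = (2*m, 2*m+1)" using Z1 by simp
  have l: "2*m < 2*n" using nm by simp
  have "nx n (2*m) = n" "opp n n = 0" using nm by (auto simp: nx_def opp_def)
  then show ?thesis using stepM_nx[OF n2 l] b nm by (simp only: p1) simp
qed

lemma Rev: "i \<le> 2*n-1 \<Longrightarrow> (fM n ^^ (2*n+i)) (0,1) = (if i = 0 then 0 else 2*n - i, 2*n-1-i)"
proof (induction i)
  case 0
  have "(fM n ^^ (2*n)) (0,1) = fM n ((fM n ^^ (4*m+1)) (0,1))"
    using nm by (simp only: p1[symmetric]) simp
  also have "\<dots> = (0, 2*n-1)" using Z1end flip2[OF n2 on] by simp
  finally show ?case by simp
next
  case (Suc i)
  let ?a = "if i = 0 then 0 else 2*n - i"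
  have a: "?a < 2*n" "pv n ?a = 2*n-1-i" "pv n (2*n-1-i) = 2*n-1-Suc i" "2*n-1-i \<noteq> 0"
    using Suc.prems n2 by (auto simp: pv_def)
  have "(fM n ^^ (2*n+Suc i)) (0,1) = fM n (?a, 2*n-1-i)" using Suc by simp
  also have "\<dots> = (2*n-1-i, 2*n-1-Suc i)" using stepM_pv[OF n2 a(1)] a by simp
  finally show ?case using Suc.prems by simp
qed

lemma A2: "j < m \<Longrightarrow> opp n (2*j) = 2*j+n \<and> nx n (2*j+n) = 2*j+n+1 \<and> opp n (2*j+n+1) = 2*j+1
   \<and> nx n (2*j+1) = 2*j+2 \<and> opp n (2*j+2) = 2*j+2+n"
  using nm by (auto simp: nx_def opp_def)

lemma Z2start: "(fM n ^^ (4*n)) (0,1) = (0, n)"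
proof -
  have "(fM n ^^ (4*n)) (0,1) = fM n ((fM n ^^ (2*n+(2*n-1))) (0,1))"
    using n2 by (simp only: p1[symmetric]) simp
  also have "\<dots> = fM n (1, 0)" using Rev[of "2*n-1"] n2 by simp
  also have "\<dots> = (0, n)" using flip3[OF n2 on] .
  finally show ?thesis .
qed

lemma Z2: "j \<le> m \<Longrightarrow> (fM n ^^ (4*n+4*j)) (0,1) = (2*j, 2*j+n)"
proof (induction j)
  case 0 then show ?case using Z2start by simp
next
  case (Suc j)
  then have j: "j < m" by simp
  note a = A2[OF j]
  have l: "2*j < 2*n" "2*j+n < 2*n" "2*j+n+1 < 2*n" "2*j+1 < 2*n" using j nm by auto
  have "(fM n ^^ (4*n+4*j+4)) (0,1) = fM n (fM n (fM n (fM n (2*j, 2*j+n))))"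
    using Suc j by (simp only: p4; simp)
  also have "fM n (2*j, 2*j+n) = (2*j+n, 2*j+n+1)"
    using stepM_opp[OF n2 l(1)] a n2 by simp
  also have "fM n (2*j+n, 2*j+n+1) = (2*j+n+1, 2*j+1)"
    using stepM_nx[OF n2 l(2)] a by simp
  also have "fM n (2*j+n+1, 2*j+1) = (2*j+1, 2*j+2)"
    using stepM_opp[OF n2 l(3)] a by simp
  also have "fM n (2*j+1, 2*j+2) = (2*j+2, 2*j+2+n)"
    using stepM_nx[OF n2 l(4)] a by simp
  finally show ?case by (simp add: algebra_simps)
qed

lemma Z2K: assumes j: "j < m"
  shows "(fM n ^^ (4*n+4*j+1)) (0,1) = (2*j+n, 2*j+n+1)"
    "(fM n ^^ (4*n+4*j+2)) (0,1) = (2*j+n+1, 2*j+1)"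
    "(fM n ^^ (4*n+4*j+3)) (0,1) = (2*j+1, 2*j+2)"
proof -
  note a = A2[OF j]
  have l: "2*j < 2*n" "2*j+n < 2*n" "2*j+n+1 < 2*n" "2*j+1 < 2*n" using j nm by auto
  have b: "(fM n ^^ (4*n+4*j)) (0,1) = (2*j, 2*j+n)" using Z2 j by simp
  show q1: "(fM n ^^ (4*n+4*j+1)) (0,1) = (2*j+n, 2*j+n+1)"
    using stepM_opp[OF n2 l(1)] a b n2 by (simp only: p1) simp
  show q2: "(fM n ^^ (4*n+4*j+2)) (0,1) = (2*j+n+1, 2*j+1)"
    using stepM_nx[OF n2 l(2)] a q1 by (simp only: pk2 pk3) simp
  show "(fM n ^^ (4*n+4*j+3)) (0,1) = (2*j+1, 2*j+2)"
    using stepM_opp[OF n2 l(3)] a q2 by (simp only: pk2 pk3) simp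
qed

lemma Z2end: "(fM n ^^ (4*n+4*m+1)) (0,1) = (2*n-1, 0)"
proof -
  have b: "(fM n ^^ (4*n+4*m)) (0,1) = (2*m, 2*m+n)" using Z2 by simp
  have l: "2*m < 2*n" using nm by simp
  have "opp n (2*m) = 2*m+n" "nx n (2*m+n) = 0" "2*m+n = 2*n-1" using nm by (auto simp: nx_def opp_def)
  then show ?thesis using stepM_opp[OF n2 l] b nm by (simp only: p1) simp
qed

lemma OPer: "(fM n ^^ (6*n)) (0,1) = (0,1)"
proof -
  have "(fM n ^^ (6*n)) (0,1) = fM n ((fM n ^^ (4*n+4*m+1)) (0,1))"
    using nm by (simp only: p1[symmetric]) simp
  also have "\<dots> = (0,1)" using Z2end flip1[OF n2 on] by simp
  finally show ?thesis .
qed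


lemma OCov: assumes d: "d \<in> darts (EM n)"
  shows "\<exists>k. d = (fM n ^^ k) (0,1)"
proof -
  obtain u w where uw: "d = (u,w)" "u < 2*n" "w = nx n u \<or> w = pv n u \<or> w = opp n u"
    using d n2 by (cases d) (auto simp: darts_def adjM)
  have "\<exists>k. (u, w) = (fM n ^^ k) (0,1)"
  proof -
    consider "w = nx n u" | "w = pv n u" | "w = opp n u" using uw by blast
    then show ?thesis
    proof cases
      case 1
      consider "u < n" | "u = 2*n-1" | "n \<le> u" "u < 2*n-1" using uw(2) by linarith
      then show ?thesis
      proof cases
        case c: 1
        show ?thesis
        proof (cases "even u")
          case True
          then obtain j where j: "u = 2*j" by (rule evenE)
          have jm: "j \<le> m" using c j nm by simp
          show ?thesis by (rule witness[OF Z1[OF jm]]) (use c j 1 nm in \<open>auto simp: nx_def\<close>)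
        next
          case False
          then obtain j where j: "u = 2*j+1" by (rule oddE)
          have jm: "j < m" using c j nm by simp
          show ?thesis by (rule witness[OF Z2K(3)[OF jm]]) (use c j 1 nm in \<open>auto simp: nx_def\<close>)
        qed
      next
        case c: 2
        show ?thesis by (rule witness[OF Z2end]) (use c 1 nm in \<open>auto simp: nx_def\<close>)
      next
        case c: 3
        show ?thesis
        proof (cases "even (u - n)")
          case True
          then obtain j where j: "u - n = 2*j" by (rule evenE)
          have jm: "j < m" using c j nm by simp
          show ?thesis by (rule witness[OF Z2K(1)[OF jm]]) (use c j 1 nm in \<open>auto simp: nx_def\<close>)
        next
          case False
          then obtain j where j: "u - n = 2*j+1" by (rule oddE)
          have jm: "j < m" using c j nm by simp
          show ?thesis by (rule witness[OF Z1K(2)[OF jm]]) (use c j 1 nm in \<open>auto simp: nx_def\<close>)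
        qed
      qed
    next
      case 2
      define i where "i = (if u = 0 then 0 else 2*n - u)"
      have i: "i \<le> 2*n-1" using uw(2) by (auto simp: i_def)
      show ?thesis by (rule witness[OF Rev[OF i]]) (use 2 uw(2) in \<open>auto simp: i_def pv_def\<close>)
    next
      case 3
      consider "u < n" | "u = n" | "n < u" by linarith
      then show ?thesis
      proof cases
        case c: 1
        show ?thesis
        proof (cases "even u")
          case True
          then obtain j where j: "u = 2*j" by (rule evenE)
          have jm: "j \<le> m" using c j nm by simp
          show ?thesis by (rule witness[OF Z2[OF jm]]) (use c j 3 nm in \<open>auto simp: opp_def\<close>)
        next
          case False
          then obtain j where j: "u = 2*j+1" by (rule oddE)
          have jm: "j < m" using c j nm by simp
          show ?thesis by (rule witness[OF Z1K(1)[OF jm]]) (use c j 3 nm in \<open>auto simp: opp_def\<close>)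
        qed
      next
        case c: 2
        show ?thesis by (rule witness[OF Z1end]) (use c 3 in \<open>auto simp: opp_def\<close>)
      next
        case c: 3
        show ?thesis
        proof (cases "even (u - n)")
          case True
          then obtain j0 where j0: "u - n = 2*j0" by (rule evenE)
          then obtain j where j: "u - n = 2*j+2" using c by (cases j0) auto
          have jm: "j < m" using c j nm uw(2) by simp
          show ?thesis by (rule witness[OF Z1K(3)[OF jm]]) (use c j 3 nm in \<open>auto simp: opp_def\<close>)
        next
          case False
          then obtain j where j: "u - n = 2*j+1" by (rule oddE)
          have jm: "j < m" using c j nm uw(2) by simp
          show ?thesis by (rule witness[OF Z2K(2)[OF jm]]) (use c j 3 nm in \<open>auto simp: opp_def\<close>)
        qed
      qed
    qed
  qed
  then show ?thesis using uw(1) by simp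
qed

lemma OFaces: "card (faces (EM n) (rotR (EM n) (RM n))) \<le> 1"
  by (rule card_faces_le1[OF OPer _ OCov]) (use n2 in auto)

end


context fixes n :: nat assumes n2: "2 \<le> n"
begin

abbreviation "fD \<equiv> face_perm (rotR (ED n) (RD n))"

lemma fD_step: "adj (ED n) a b \<Longrightarrow> fD (a,b) = (b, RD n b a)"
proof -
  assume "adj (ED n) a b"
  then have "adj (ED n) b a" using adjD[OF n2] adjM_sym[OF n2] by blast
  then show ?thesis by (simp add: face_perm_def rotR_simp)
qed

lemma adjD': "a < 2*n \<Longrightarrow> a \<noteq> 0 \<Longrightarrow> b \<noteq> 0 \<Longrightarrow> b = nx n a \<or> b = pv n a \<or> b = opp n a \<Longrightarrow> adj (ED n) a b"
  by (simp add: adjD[OF n2] adjM[OF n2])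

lemma sD_nx: "a < 2*n \<Longrightarrow> a \<noteq> 0 \<Longrightarrow> nx n a = b \<Longrightarrow> b \<noteq> 0 \<Longrightarrow> opp n b = c \<Longrightarrow> c \<noteq> 0 \<Longrightarrow> fD (a,b) = (b,c)"
proof -
  assume h: "a < 2*n" "a \<noteq> 0" "nx n a = b" "b \<noteq> 0" "opp n b = c" "c \<noteq> 0"
  have b: "b < 2*n" "pv n b = a" using h n2 by auto
  have "R0 n b a = c" using R0_pv[OF n2 b(1)] b h by simp
  then show ?thesis using h fD_step adjD'[of a b] by (simp add: RD_def)
qed

lemma sD_opp: "a < 2*n \<Longrightarrow> a \<noteq> 0 \<Longrightarrow> opp n a = b \<Longrightarrow> b \<noteq> 0 \<Longrightarrow> nx n b = c \<Longrightarrow> c \<noteq> 0 \<Longrightarrow> fD (a,b) = (b,c)"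
proof -
  assume h: "a < 2*n" "a \<noteq> 0" "opp n a = b" "b \<noteq> 0" "nx n b = c" "c \<noteq> 0"
  have b: "b < 2*n" "opp n b = a" using h n2 by auto
  have "R0 n b a = c" using R0_opp[OF n2 b(1)] b h by simp
  then show ?thesis using h fD_step adjD'[of a b] by (simp add: RD_def)
qed

lemma sD_pv: "a < 2*n \<Longrightarrow> a \<noteq> 0 \<Longrightarrow> pv n a = b \<Longrightarrow> b \<noteq> 0 \<Longrightarrow> pv n b = c \<Longrightarrow> c \<noteq> 0 \<Longrightarrow> fD (a,b) = (b,c)"
proof -
  assume h: "a < 2*n" "a \<noteq> 0" "pv n a = b" "b \<noteq> 0" "pv n b = c" "c \<noteq> 0"
  have b: "b < 2*n" "nx n b = a" using h n2 by auto
  have "R0 n b a = c" using R0_nx[OF n2 b(1)] b h by simp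
  then show ?thesis using h fD_step adjD'[of a b] by (simp add: RD_def)
qed

lemma sD_nx0: "a < 2*n \<Longrightarrow> a \<noteq> 0 \<Longrightarrow> nx n a = b \<Longrightarrow> b \<noteq> 0 \<Longrightarrow> opp n b = 0 \<Longrightarrow> nx n b = c \<Longrightarrow> fD (a,b) = (b,c)"
proof -
  assume h: "a < 2*n" "a \<noteq> 0" "nx n a = b" "b \<noteq> 0" "opp n b = 0" "nx n b = c"
  have b: "b < 2*n" "pv n b = a" using h n2 by auto
  have "R0 n b a = 0" using R0_pv[OF n2 b(1)] b h by simp
  moreover have "R0 n b 0 = c" using R0_0b[OF n2 b(1)] h by simp
  ultimately show ?thesis using h fD_step adjD'[of a b] by (simp add: RD_def)
qed

lemma sD_opp0: "a < 2*n \<Longrightarrow> a \<noteq> 0 \<Longrightarrow> opp n a = b \<Longrightarrow> b \<noteq> 0 \<Longrightarrow> nx n b = 0 \<Longrightarrow> pv n b = c \<Longrightarrow> fD (a,b) = (b,c)"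
proof -
  assume h: "a < 2*n" "a \<noteq> 0" "opp n a = b" "b \<noteq> 0" "nx n b = 0" "pv n b = c"
  have b: "b < 2*n" "opp n b = a" using h n2 by auto
  have "R0 n b a = 0" using R0_opp[OF n2 b(1)] b h by simp
  moreover have "R0 n b 0 = c" using R0_0c[OF n2 b(1)] h by simp
  ultimately show ?thesis using h fD_step adjD'[of a b] by (simp add: RD_def)
qed

lemma sD_pv0: "a < 2*n \<Longrightarrow> a \<noteq> 0 \<Longrightarrow> pv n a = b \<Longrightarrow> b \<noteq> 0 \<Longrightarrow> pv n b = 0 \<Longrightarrow> opp n b = c \<Longrightarrow> fD (a,b) = (b,c)"
proof -
  assume h: "a < 2*n" "a \<noteq> 0" "pv n a = b" "b \<noteq> 0" "pv n b = 0" "opp n b = c"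
  have b: "b < 2*n" "nx n b = a" using h n2 by auto
  have "R0 n b a = 0" using R0_nx[OF n2 b(1)] b h by simp
  moreover have "R0 n b 0 = c" using R0_0a[OF n2 b(1)] h by simp
  ultimately show ?thesis using h fD_step adjD'[of a b] by (simp add: RD_def)
qed

end


lemma P1: "(f ^^ (k+1)) d = f ((f ^^ k) d)" by simp
lemma PK2: "(f ^^ (k+2)) d = f ((f ^^ (k+1)) d)" by (simp add: numeral_2_eq_2)
lemma PK3: "(f ^^ (k+3)) d = f ((f ^^ (k+2)) d)" by (simp add: numeral_3_eq_3 numeral_2_eq_2)
lemma P4: "(f ^^ (k+4)) d = f (f (f (f ((f ^^ k) d))))" by (simp add: eval_nat_numeral)

lemma ev2: "even (x::nat) \<Longrightarrow> x \<noteq> 0 \<Longrightarrow> \<exists>j. x = 2*j+2"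
  by (metis evenE add.commute add_cancel_right_left mult_2 not0_implies_Suc add_Suc_right One_nat_def numeral_2_eq_2)
lemma od3: "odd (x::nat) \<Longrightarrow> x \<noteq> 1 \<Longrightarrow> \<exists>j. x = 2*j+3"
proof -
  assume "odd x" "x \<noteq> 1"
  from \<open>odd x\<close> obtain j0 where "x = 2*j0+1" by (rule oddE)
  with \<open>x \<noteq> 1\<close> have "x = 2*(j0-1)+3" by (cases j0) auto
  then show ?thesis by blast
qed

context fixes n m :: nat assumes n2: "2 \<le> n" and nm: "n = 2*m+1"
begin

lemma wit: "(fD n ^^ k) d = (a, b) \<Longrightarrow> a = u \<Longrightarrow> b = w \<Longrightarrow> \<exists>k. (u, w) = (fD n ^^ k) d"
  by metis

lemma Za: "j < m \<Longrightarrow> (fD n ^^ (4*j)) (1,2) = (2*j+1, 2*j+2)"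
proof (induction j)
  case 0 then show ?case by simp
next
  case (Suc j)
  then have j: "j+1 < m" by simp
  have "(fD n ^^ (4*j+4)) (1,2) = fD n (fD n (fD n (fD n (2*j+1, 2*j+2))))"
    using Suc j by (simp only: P4; simp)
  also have "fD n (2*j+1, 2*j+2) = (2*j+2, 2*j+2+n)"
    by (rule sD_nx[OF n2]) (use j nm in \<open>auto simp: nx_def opp_def\<close>)
  also have "fD n (2*j+2, 2*j+2+n) = (2*j+2+n, 2*j+3+n)"
    by (rule sD_opp[OF n2]) (use j nm in \<open>auto simp: nx_def opp_def\<close>)
  also have "fD n (2*j+2+n, 2*j+3+n) = (2*j+3+n, 2*j+3)"
    by (rule sD_nx[OF n2]) (use j nm in \<open>auto simp: nx_def opp_def\<close>)
  also have "fD n (2*j+3+n, 2*j+3) = (2*j+3, 2*j+4)"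
    by (rule sD_opp[OF n2]) (use j nm in \<open>auto simp: nx_def opp_def\<close>)
  finally show ?case by (simp add: algebra_simps)
qed

lemma ZaK: assumes j: "j+1 < m"
  shows "(fD n ^^ (4*j+1)) (1,2) = (2*j+2, 2*j+2+n)"
    "(fD n ^^ (4*j+2)) (1,2) = (2*j+2+n, 2*j+3+n)"
    "(fD n ^^ (4*j+3)) (1,2) = (2*j+3+n, 2*j+3)"
proof -
  have b: "(fD n ^^ (4*j)) (1,2) = (2*j+1, 2*j+2)" using Za j by simp
  have s1: "fD n (2*j+1, 2*j+2) = (2*j+2, 2*j+2+n)"
    by (rule sD_nx[OF n2]) (use j nm in \<open>auto simp: nx_def opp_def\<close>)
  have s2: "fD n (2*j+2, 2*j+2+n) = (2*j+2+n, 2*j+3+n)"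
    by (rule sD_opp[OF n2]) (use j nm in \<open>auto simp: nx_def opp_def\<close>)
  have s3: "fD n (2*j+2+n, 2*j+3+n) = (2*j+3+n, 2*j+3)"
    by (rule sD_nx[OF n2]) (use j nm in \<open>auto simp: nx_def opp_def\<close>)
  show q1: "(fD n ^^ (4*j+1)) (1,2) = (2*j+2, 2*j+2+n)" unfolding P1 b by (rule s1)
  show q2: "(fD n ^^ (4*j+2)) (1,2) = (2*j+2+n, 2*j+3+n)" unfolding PK2 q1 by (rule s2)
  show "(fD n ^^ (4*j+3)) (1,2) = (2*j+3+n, 2*j+3)" unfolding PK3 q2 by (rule s3)
qed

lemma ZaE: "(fD n ^^ (2*n-5)) (1,2) = (n-1, 2*n-1)" "(fD n ^^ (2*n-4)) (1,2) = (2*n-1, 2*n-2)"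
proof -
  have m1: "1 \<le> m" using n2 nm by simp
  obtain p where p: "m = p+1" using m1 by (metis add.commute le_Suc_ex)
  have b: "(fD n ^^ (4*(m-1))) (1,2) = (n-2, n-1)" using Za[of p] p nm by simp
  have s1: "fD n (n-2, n-1) = (n-1, 2*n-1)"
    by (rule sD_nx[OF n2]) (use m1 nm in \<open>auto simp: nx_def opp_def\<close>)
  have s2: "fD n (n-1, 2*n-1) = (2*n-1, 2*n-2)"
    by (rule sD_opp0[OF n2]) (use m1 nm in \<open>auto simp: nx_def opp_def pv_def\<close>)
  have e1: "2*n-5 = 4*(m-1)+1" "2*n-4 = (2*n-5)+1" using m1 nm by auto
  show q1: "(fD n ^^ (2*n-5)) (1,2) = (n-1, 2*n-1)" unfolding e1(1) P1 b by (rule s1)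
  show "(fD n ^^ (2*n-4)) (1,2) = (2*n-1, 2*n-2)" unfolding e1(2) P1 q1 by (rule s2)
qed

lemma RevD: "i \<le> 2*n-3 \<Longrightarrow> (fD n ^^ (2*n-4+i)) (1,2) = (2*n-1-i, 2*n-2-i)"
proof (induction i)
  case 0 then show ?case using ZaE by simp
next
  case (Suc i)
  have "(fD n ^^ (2*n-4+Suc i)) (1,2) = fD n (2*n-1-i, 2*n-2-i)" using Suc by simp
  also have "\<dots> = (2*n-2-i, 2*n-3-i)"
    by (rule sD_pv[OF n2]) (use Suc.prems nm in \<open>auto simp: pv_def\<close>)
  finally show ?case by simp
qed

lemma ZbS: "(fD n ^^ (4*n-6)) (1,2) = (1, n+1)"
proof -
  have e: "4*n-6 = (2*n-4+(2*n-3))+1" using nm n2 by simp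
  have b: "(fD n ^^ (2*n-4+(2*n-3))) (1,2) = (2, 1)" using RevD[of "2*n-3"] nm n2 by simp
  have "fD n (2, 1) = (1, n+1)"
    by (rule sD_pv0[OF n2]) (use nm n2 in \<open>auto simp: pv_def opp_def\<close>)
  then show ?thesis unfolding e P1 b .
qed

lemma Zb: "j < m \<Longrightarrow> (fD n ^^ (4*n-6+4*j)) (1,2) = (2*j+1, 2*j+1+n)"
proof (induction j)
  case 0 then show ?case using ZbS by simp
next
  case (Suc j)
  then have j: "j+1 < m" by simp
  have "(fD n ^^ (4*n-6+4*j+4)) (1,2) = fD n (fD n (fD n (fD n (2*j+1, 2*j+1+n))))"
    using Suc j by (simp only: P4; simp)
  also have "fD n (2*j+1, 2*j+1+n) = (2*j+1+n, 2*j+2+n)"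
    by (rule sD_opp[OF n2]) (use j nm in \<open>auto simp: nx_def opp_def\<close>)
  also have "fD n (2*j+1+n, 2*j+2+n) = (2*j+2+n, 2*j+2)"
    by (rule sD_nx[OF n2]) (use j nm in \<open>auto simp: nx_def opp_def\<close>)
  also have "fD n (2*j+2+n, 2*j+2) = (2*j+2, 2*j+3)"
    by (rule sD_opp[OF n2]) (use j nm in \<open>auto simp: nx_def opp_def\<close>)
  also have "fD n (2*j+2, 2*j+3) = (2*j+3, 2*j+3+n)"
    by (rule sD_nx[OF n2]) (use j nm in \<open>auto simp: nx_def opp_def\<close>)
  finally show ?case by (simp add: algebra_simps)
qed

lemma ZbK: assumes j: "j < m"
  shows "(fD n ^^ (4*n-6+4*j+1)) (1,2) = (2*j+1+n, 2*j+2+n)"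
    "(fD n ^^ (4*n-6+4*j+2)) (1,2) = (2*j+2+n, 2*j+2)"
    "(fD n ^^ (4*n-6+4*j+3)) (1,2) = (2*j+2, 2*j+3)"
proof -
  have b: "(fD n ^^ (4*n-6+4*j)) (1,2) = (2*j+1, 2*j+1+n)" using Zb j by simp
  have s1: "fD n (2*j+1, 2*j+1+n) = (2*j+1+n, 2*j+2+n)"
    by (rule sD_opp[OF n2]) (use j nm in \<open>auto simp: nx_def opp_def\<close>)
  have s2: "fD n (2*j+1+n, 2*j+2+n) = (2*j+2+n, 2*j+2)"
    by (rule sD_nx[OF n2]) (use j nm in \<open>auto simp: nx_def opp_def\<close>)
  have s3: "fD n (2*j+2+n, 2*j+2) = (2*j+2, 2*j+3)"
    by (rule sD_opp[OF n2]) (use j nm in \<open>auto simp: nx_def opp_def\<close>)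
  show q1: "(fD n ^^ (4*n-6+4*j+1)) (1,2) = (2*j+1+n, 2*j+2+n)" unfolding P1 b by (rule s1)
  show q2: "(fD n ^^ (4*n-6+4*j+2)) (1,2) = (2*j+2+n, 2*j+2)" unfolding PK2 q1 by (rule s2)
  show "(fD n ^^ (4*n-6+4*j+3)) (1,2) = (2*j+2, 2*j+3)" unfolding PK3 q2 by (rule s3)
qed

lemma ZbE: "(fD n ^^ (6*n-8)) (1,2) = (n, n+1)" "(fD n ^^ (6*n-7)) (1,2) = (n+1, 1)"
  "(fD n ^^ (6*n-6)) (1,2) = (1, 2)"
proof -
  have m1: "1 \<le> m" using n2 nm by simp
  obtain p where p: "m = p+1" using m1 by (metis add.commute le_Suc_ex)
  have b: "(fD n ^^ (4*n-6+4*(m-1)+3)) (1,2) = (n-1, n)" using ZbK(3)[of p] p nm by simp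
  have s1: "fD n (n-1, n) = (n, n+1)"
    by (rule sD_nx0[OF n2]) (use m1 nm in \<open>auto simp: nx_def opp_def\<close>)
  have s2: "fD n (n, n+1) = (n+1, 1)"
    by (rule sD_nx[OF n2]) (use m1 nm in \<open>auto simp: nx_def opp_def\<close>)
  have s3: "fD n (n+1, 1) = (1, 2)"
    by (rule sD_opp[OF n2]) (use m1 nm in \<open>auto simp: nx_def opp_def\<close>)
  have e: "6*n-8 = (4*n-6+4*(m-1)+3)+1" "6*n-7 = (6*n-8)+1" "6*n-6 = (6*n-7)+1" using m1 nm by auto
  show q1: "(fD n ^^ (6*n-8)) (1,2) = (n, n+1)" unfolding e(1) P1 b by (rule s1)
  show q2: "(fD n ^^ (6*n-7)) (1,2) = (n+1, 1)" unfolding e(2) P1 q1 by (rule s2)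
  show "(fD n ^^ (6*n-6)) (1,2) = (1, 2)" unfolding e(3) P1 q2 by (rule s3)
qed


lemma DOCov: assumes d: "d \<in> darts (ED n)"
  shows "\<exists>k. d = (fD n ^^ k) (1,2)"
proof -
  obtain u w where uw: "d = (u,w)" "u < 2*n" "u \<noteq> 0" "w \<noteq> 0" "w = nx n u \<or> w = pv n u \<or> w = opp n u"
    using d n2 by (cases d) (auto simp: darts_def adjD adjM)
  have "\<exists>k. (u, w) = (fD n ^^ k) (1,2)"
  proof -
    consider "w = nx n u" | "w = pv n u" | "w = opp n u" using uw by blast
    then show ?thesis
    proof cases
      case 1
      then have u1: "u \<noteq> 2*n-1" using uw(4) by (auto simp: nx_def)
      consider "u < n" | "u = n" | "n < u" by linarith
      then show ?thesis
      proof cases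
        case c: 1
        show ?thesis
        proof (cases "even u")
          case True
          then obtain j where j: "u = 2*j+2" using ev2 uw(3) by blast
          have jm: "j < m" using c j nm by simp
          show ?thesis by (rule wit[OF ZbK(3)[OF jm]]) (use c j 1 nm in \<open>auto simp: nx_def\<close>)
        next
          case False
          then obtain j where j: "u = 2*j+1" by (rule oddE)
          have jm: "j < m" using c j nm by simp
          show ?thesis by (rule wit[OF Za[OF jm]]) (use c j 1 nm in \<open>auto simp: nx_def\<close>)
        qed
      next
        case c: 2
        show ?thesis by (rule wit[OF ZbE(1)]) (use c 1 nm n2 in \<open>auto simp: nx_def\<close>)
      next
        case c: 3
        show ?thesis
        proof (cases "even (u - n)")
          case True
          have "u - n \<noteq> 0" using c by simp
          then obtain j where j: "u - n = 2*j+2" using ev2 True by blast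
          have jm: "j+1 < m" using c j nm uw(2) u1 by simp
          show ?thesis by (rule wit[OF ZaK(2)[OF jm]]) (use c j 1 u1 nm in \<open>auto simp: nx_def\<close>)
        next
          case False
          then obtain j where j: "u - n = 2*j+1" by (rule oddE)
          have jm: "j < m" using c j nm uw(2) by simp
          show ?thesis by (rule wit[OF ZbK(1)[OF jm]]) (use c j 1 u1 nm in \<open>auto simp: nx_def\<close>)
        qed
      qed
    next
      case 2
      then have u1: "u \<noteq> 1" using uw(4) by (auto simp: pv_def)
      have i: "2*n-1-u \<le> 2*n-3" using uw(3) u1 by simp
      show ?thesis by (rule wit[OF RevD[OF i]]) (use 2 uw(2,3) u1 in \<open>auto simp: pv_def\<close>)
    next
      case 3
      then have un: "u \<noteq> n" using uw(4) by (auto simp: opp_def)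
      consider "u < n" | "n < u" using un by linarith
      then show ?thesis
      proof cases
        case c: 1
        show ?thesis
        proof (cases "even u")
          case True
          then obtain j where j: "u = 2*j+2" using ev2 uw(3) by blast
          show ?thesis
          proof (cases "j+1 < m")
            case True
            show ?thesis by (rule wit[OF ZaK(1)[OF True]]) (use c j 3 nm in \<open>auto simp: opp_def\<close>)
          next
            case False
            then have "u = n-1" using c j nm by simp
            show ?thesis by (rule wit[OF ZaE(1)]) (use c \<open>u = n-1\<close> 3 nm in \<open>auto simp: opp_def\<close>)
          qed
        next
          case False
          then obtain j where j: "u = 2*j+1" by (rule oddE)
          have jm: "j < m" using c j nm by simp
          show ?thesis by (rule wit[OF Zb[OF jm]]) (use c j 3 nm in \<open>auto simp: opp_def\<close>)
        qed
      next
        case c: 2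
        show ?thesis
        proof (cases "u = n+1")
          case True
          show ?thesis by (rule wit[OF ZbE(2)]) (use True 3 nm n2 in \<open>auto simp: opp_def\<close>)
        next
          case u1: False
          show ?thesis
          proof (cases "even (u - n)")
            case True
            have "u - n \<noteq> 0" using c by simp
          then obtain j where j: "u - n = 2*j+2" using ev2 True by blast
            have jm: "j < m" using c j nm uw(2) by simp
            show ?thesis by (rule wit[OF ZbK(2)[OF jm]]) (use c j 3 nm in \<open>auto simp: opp_def\<close>)
          next
            case False
            have "u - n \<noteq> 1" using c u1 by simp
            then obtain j where j: "u - n = 2*j+3" using od3 False by blast
            have jm: "j+1 < m" using c j nm uw(2) by simp
            show ?thesis by (rule wit[OF ZaK(3)[OF jm]]) (use c j 3 nm in \<open>auto simp: opp_def\<close>)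
          qed
        qed
      qed
    qed
  qed
  then show ?thesis using uw(1) by simp
qed

lemma DOFaces: "card (faces (ED n) (rotR (ED n) (RD n))) \<le> 1"
proof (rule card_faces_le1[OF ZbE(3)])
  show "0 < 6*n-6" using n2 nm by simp
next
  fix d assume "d \<in> darts (ED n)"
  then show "\<exists>k. d = (fD n ^^ k) (1,2)" by (rule DOCov)
qed

end


context fixes n m :: nat assumes n2: "2 \<le> n" and nm: "n = 2*m"
begin

lemma witE: "(fD n ^^ k) d = (a, b) \<Longrightarrow> a = u \<Longrightarrow> b = w \<Longrightarrow> \<exists>k. (u, w) = (fD n ^^ k) d"
  by metis

lemma Fa: "j < m \<Longrightarrow> (fD n ^^ (4*j)) (1,2) = (2*j+1, 2*j+2)"
proof (induction j)
  case 0 then show ?case by simp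
next
  case (Suc j)
  then have j: "j+1 < m" by simp
  have "(fD n ^^ (4*j+4)) (1,2) = fD n (fD n (fD n (fD n (2*j+1, 2*j+2))))"
    using Suc j by (simp only: P4; simp)
  also have "fD n (2*j+1, 2*j+2) = (2*j+2, 2*j+2+n)"
    by (rule sD_nx[OF n2]) (use j nm in \<open>auto simp: nx_def opp_def\<close>)
  also have "fD n (2*j+2, 2*j+2+n) = (2*j+2+n, 2*j+3+n)"
    by (rule sD_opp[OF n2]) (use j nm in \<open>auto simp: nx_def opp_def\<close>)
  also have "fD n (2*j+2+n, 2*j+3+n) = (2*j+3+n, 2*j+3)"
    by (rule sD_nx[OF n2]) (use j nm in \<open>auto simp: nx_def opp_def\<close>)
  also have "fD n (2*j+3+n, 2*j+3) = (2*j+3, 2*j+4)"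
    by (rule sD_opp[OF n2]) (use j nm in \<open>auto simp: nx_def opp_def\<close>)
  finally show ?case by (simp add: algebra_simps)
qed

lemma FaK: assumes j: "j+1 < m"
  shows "(fD n ^^ (4*j+1)) (1,2) = (2*j+2, 2*j+2+n)"
    "(fD n ^^ (4*j+2)) (1,2) = (2*j+2+n, 2*j+3+n)"
    "(fD n ^^ (4*j+3)) (1,2) = (2*j+3+n, 2*j+3)"
proof -
  have b: "(fD n ^^ (4*j)) (1,2) = (2*j+1, 2*j+2)" using Fa j by simp
  have s1: "fD n (2*j+1, 2*j+2) = (2*j+2, 2*j+2+n)"
    by (rule sD_nx[OF n2]) (use j nm in \<open>auto simp: nx_def opp_def\<close>)
  have s2: "fD n (2*j+2, 2*j+2+n) = (2*j+2+n, 2*j+3+n)"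
    by (rule sD_opp[OF n2]) (use j nm in \<open>auto simp: nx_def opp_def\<close>)
  have s3: "fD n (2*j+2+n, 2*j+3+n) = (2*j+3+n, 2*j+3)"
    by (rule sD_nx[OF n2]) (use j nm in \<open>auto simp: nx_def opp_def\<close>)
  show q1: "(fD n ^^ (4*j+1)) (1,2) = (2*j+2, 2*j+2+n)" unfolding P1 b by (rule s1)
  show q2: "(fD n ^^ (4*j+2)) (1,2) = (2*j+2+n, 2*j+3+n)" unfolding PK2 q1 by (rule s2)
  show "(fD n ^^ (4*j+3)) (1,2) = (2*j+3+n, 2*j+3)" unfolding PK3 q2 by (rule s3)
qed

lemma FaE: "(fD n ^^ (2*n-3)) (1,2) = (n, n+1)" "(fD n ^^ (2*n-2)) (1,2) = (n+1, 1)"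
  "(fD n ^^ (2*n-1)) (1,2) = (1, 2)"
proof -
  have m1: "1 \<le> m" using n2 nm by simp
  obtain p where p: "m = p+1" using m1 by (metis add.commute le_Suc_ex)
  have b: "(fD n ^^ (4*p)) (1,2) = (n-1, n)" using Fa[of p] p nm by simp
  have s1: "fD n (n-1, n) = (n, n+1)"
    by (rule sD_nx0[OF n2]) (use m1 nm in \<open>auto simp: nx_def opp_def\<close>)
  have s2: "fD n (n, n+1) = (n+1, 1)"
    by (rule sD_nx[OF n2]) (use m1 nm in \<open>auto simp: nx_def opp_def\<close>)
  have s3: "fD n (n+1, 1) = (1, 2)"
    by (rule sD_opp[OF n2]) (use m1 nm in \<open>auto simp: nx_def opp_def\<close>)
  have e: "2*n-3 = 4*p+1" "2*n-2 = (2*n-3)+1" "2*n-1 = (2*n-2)+1" using p nm by auto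
  show q1: "(fD n ^^ (2*n-3)) (1,2) = (n, n+1)" unfolding e(1) P1 b by (rule s1)
  show q2: "(fD n ^^ (2*n-2)) (1,2) = (n+1, 1)" unfolding e(2) P1 q1 by (rule s2)
  show "(fD n ^^ (2*n-1)) (1,2) = (1, 2)" unfolding e(3) P1 q2 by (rule s3)
qed

lemma Fb: "j < m \<Longrightarrow> (fD n ^^ (4*j)) (1,n+1) = (2*j+1, 2*j+1+n)"
proof (induction j)
  case 0 then show ?case by simp
next
  case (Suc j)
  then have j: "j+1 < m" by simp
  have "(fD n ^^ (4*j+4)) (1,n+1) = fD n (fD n (fD n (fD n (2*j+1, 2*j+1+n))))"
    using Suc j by (simp only: P4; simp)
  also have "fD n (2*j+1, 2*j+1+n) = (2*j+1+n, 2*j+2+n)"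
    by (rule sD_opp[OF n2]) (use j nm in \<open>auto simp: nx_def opp_def\<close>)
  also have "fD n (2*j+1+n, 2*j+2+n) = (2*j+2+n, 2*j+2)"
    by (rule sD_nx[OF n2]) (use j nm in \<open>auto simp: nx_def opp_def\<close>)
  also have "fD n (2*j+2+n, 2*j+2) = (2*j+2, 2*j+3)"
    by (rule sD_opp[OF n2]) (use j nm in \<open>auto simp: nx_def opp_def\<close>)
  also have "fD n (2*j+2, 2*j+3) = (2*j+3, 2*j+3+n)"
    by (rule sD_nx[OF n2]) (use j nm in \<open>auto simp: nx_def opp_def\<close>)
  finally show ?case by (simp add: algebra_simps)
qed

lemma FbK: assumes j: "j+1 < m"
  shows "(fD n ^^ (4*j+1)) (1,n+1) = (2*j+1+n, 2*j+2+n)"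
    "(fD n ^^ (4*j+2)) (1,n+1) = (2*j+2+n, 2*j+2)"
    "(fD n ^^ (4*j+3)) (1,n+1) = (2*j+2, 2*j+3)"
proof -
  have b: "(fD n ^^ (4*j)) (1,n+1) = (2*j+1, 2*j+1+n)" using Fb j by simp
  have s1: "fD n (2*j+1, 2*j+1+n) = (2*j+1+n, 2*j+2+n)"
    by (rule sD_opp[OF n2]) (use j nm in \<open>auto simp: nx_def opp_def\<close>)
  have s2: "fD n (2*j+1+n, 2*j+2+n) = (2*j+2+n, 2*j+2)"
    by (rule sD_nx[OF n2]) (use j nm in \<open>auto simp: nx_def opp_def\<close>)
  have s3: "fD n (2*j+2+n, 2*j+2) = (2*j+2, 2*j+3)"
    by (rule sD_opp[OF n2]) (use j nm in \<open>auto simp: nx_def opp_def\<close>)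
  show q1: "(fD n ^^ (4*j+1)) (1,n+1) = (2*j+1+n, 2*j+2+n)" unfolding P1 b by (rule s1)
  show q2: "(fD n ^^ (4*j+2)) (1,n+1) = (2*j+2+n, 2*j+2)" unfolding PK2 q1 by (rule s2)
  show "(fD n ^^ (4*j+3)) (1,n+1) = (2*j+2, 2*j+3)" unfolding PK3 q2 by (rule s3)
qed

lemma FbE: "(fD n ^^ (2*n-4)) (1,n+1) = (n-1, 2*n-1)" "(fD n ^^ (2*n-3)) (1,n+1) = (2*n-1, 2*n-2)"
proof -
  have m1: "1 \<le> m" using n2 nm by simp
  obtain p where p: "m = p+1" using m1 by (metis add.commute le_Suc_ex)
  have b: "(fD n ^^ (4*p)) (1,n+1) = (n-1, 2*n-1)" using Fb[of p] p nm by simp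
  have s1: "fD n (n-1, 2*n-1) = (2*n-1, 2*n-2)"
    by (rule sD_opp0[OF n2]) (use m1 nm in \<open>auto simp: nx_def opp_def pv_def\<close>)
  have e: "2*n-4 = 4*p" "2*n-3 = (2*n-4)+1" using p nm by auto
  show q1: "(fD n ^^ (2*n-4)) (1,n+1) = (n-1, 2*n-1)" unfolding e(1) b ..
  show "(fD n ^^ (2*n-3)) (1,n+1) = (2*n-1, 2*n-2)" unfolding e(2) P1 q1 by (rule s1)
qed

lemma RevE: "i \<le> 2*n-3 \<Longrightarrow> (fD n ^^ (2*n-3+i)) (1,n+1) = (2*n-1-i, 2*n-2-i)"
proof (induction i)
  case 0 then show ?case using FbE by simp
next
  case (Suc i)
  have "(fD n ^^ (2*n-3+Suc i)) (1,n+1) = fD n (2*n-1-i, 2*n-2-i)" using Suc by simp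
  also have "\<dots> = (2*n-2-i, 2*n-3-i)"
    by (rule sD_pv[OF n2]) (use Suc.prems nm in \<open>auto simp: pv_def\<close>)
  finally show ?case by simp
qed

lemma RevEnd: "(fD n ^^ (4*n-5)) (1,n+1) = (1, n+1)"
proof -
  have e: "4*n-5 = (2*n-3+(2*n-3))+1" using nm n2 by simp
  have b: "(fD n ^^ (2*n-3+(2*n-3))) (1,n+1) = (2, 1)" using RevE[of "2*n-3"] nm n2 by simp
  have "fD n (2, 1) = (1, n+1)"
    by (rule sD_pv0[OF n2]) (use nm n2 in \<open>auto simp: pv_def opp_def\<close>)
  then show ?thesis unfolding e P1 b .
qed


lemma DECov: assumes d: "d \<in> darts (ED n)"
  shows "(\<exists>k. d = (fD n ^^ k) (1,2)) \<or> (\<exists>k. d = (fD n ^^ k) (1,n+1))"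
proof -
  obtain u w where uw: "d = (u,w)" "u < 2*n" "u \<noteq> 0" "w \<noteq> 0" "w = nx n u \<or> w = pv n u \<or> w = opp n u"
    using d n2 by (cases d) (auto simp: darts_def adjD adjM)
  have "(\<exists>k. (u, w) = (fD n ^^ k) (1,2)) \<or> (\<exists>k. (u, w) = (fD n ^^ k) (1,n+1))"
  proof -
    consider "w = nx n u" | "w = pv n u" | "w = opp n u" using uw by blast
    then show ?thesis
    proof cases
      case 1
      then have u1: "u \<noteq> 2*n-1" using uw(4) by (auto simp: nx_def)
      consider "u < n" | "u = n" | "n < u" by linarith
      then show ?thesis
      proof cases
        case c: 1
        show ?thesis
        proof (cases "even u")
          case True
          then obtain j where j: "u = 2*j+2" using ev2 uw(3) by blast
          have jm: "j+1 < m" using c j nm by presburger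
          have "\<exists>k. (u, w) = (fD n ^^ k) (1,n+1)"
            by (rule witE[OF FbK(3)[OF jm]]) (use c j 1 nm in \<open>auto simp: nx_def\<close>)
          then show ?thesis ..
        next
          case False
          then obtain j where j: "u = 2*j+1" by (rule oddE)
          have jm: "j < m" using c j nm by simp
          have "\<exists>k. (u, w) = (fD n ^^ k) (1,2)"
            by (rule witE[OF Fa[OF jm]]) (use c j 1 nm in \<open>auto simp: nx_def\<close>)
          then show ?thesis ..
        qed
      next
        case c: 2
        have "\<exists>k. (u, w) = (fD n ^^ k) (1,2)"
          by (rule witE[OF FaE(1)]) (use c 1 nm n2 in \<open>auto simp: nx_def\<close>)
        then show ?thesis ..
      next
        case c: 3
        show ?thesis
        proof (cases "even (u - n)")
          case True
          have "u - n \<noteq> 0" using c by simp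
          then obtain j where j: "u - n = 2*j+2" using ev2 True by blast
          have jm: "j+1 < m" using c j nm uw(2) u1 by presburger
          have "\<exists>k. (u, w) = (fD n ^^ k) (1,2)"
            by (rule witE[OF FaK(2)[OF jm]]) (use c j 1 u1 nm in \<open>auto simp: nx_def\<close>)
          then show ?thesis ..
        next
          case False
          then obtain j where j: "u - n = 2*j+1" by (rule oddE)
          have jm: "j+1 < m" using c j nm uw(2) u1 by presburger
          have "\<exists>k. (u, w) = (fD n ^^ k) (1,n+1)"
            by (rule witE[OF FbK(1)[OF jm]]) (use c j 1 u1 nm in \<open>auto simp: nx_def\<close>)
          then show ?thesis ..
        qed
      qed
    next
      case 2
      then have u1: "u \<noteq> 1" using uw(4) by (auto simp: pv_def)
      have i: "2*n-1-u \<le> 2*n-3" using uw(3) u1 by simp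
      have "\<exists>k. (u, w) = (fD n ^^ k) (1,n+1)"
        by (rule witE[OF RevE[OF i]]) (use 2 uw(2,3) u1 in \<open>auto simp: pv_def\<close>)
      then show ?thesis ..
    next
      case 3
      then have un: "u \<noteq> n" using uw(4) by (auto simp: opp_def)
      consider "u < n" | "n < u" using un by linarith
      then show ?thesis
      proof cases
        case c: 1
        show ?thesis
        proof (cases "even u")
          case True
          then obtain j where j: "u = 2*j+2" using ev2 uw(3) by blast
          have jm: "j+1 < m" using c j nm by presburger
          have "\<exists>k. (u, w) = (fD n ^^ k) (1,2)"
            by (rule witE[OF FaK(1)[OF jm]]) (use c j 3 nm in \<open>auto simp: opp_def\<close>)
          then show ?thesis ..
        next
          case False
          then obtain j where j: "u = 2*j+1" by (rule oddE)
          have jm: "j < m" using c j nm by simp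
          have "\<exists>k. (u, w) = (fD n ^^ k) (1,n+1)"
            by (rule witE[OF Fb[OF jm]]) (use c j 3 nm in \<open>auto simp: opp_def\<close>)
          then show ?thesis ..
        qed
      next
        case c: 2
        show ?thesis
        proof (cases "u = n+1")
          case True
          have "\<exists>k. (u, w) = (fD n ^^ k) (1,2)"
            by (rule witE[OF FaE(2)]) (use True 3 nm n2 in \<open>auto simp: opp_def\<close>)
          then show ?thesis ..
        next
          case u1: False
          show ?thesis
          proof (cases "even (u - n)")
            case True
            have "u - n \<noteq> 0" using c by simp
            then obtain j where j: "u - n = 2*j+2" using ev2 True by blast
            have jm: "j+1 < m" using c j nm uw(2) by presburger
            have "\<exists>k. (u, w) = (fD n ^^ k) (1,n+1)"
              by (rule witE[OF FbK(2)[OF jm]]) (use c j 3 nm in \<open>auto simp: opp_def\<close>)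
            then show ?thesis ..
          next
            case False
            have "u - n \<noteq> 1" using c u1 by simp
            then obtain j where j: "u - n = 2*j+3" using od3 False by blast
            have jm: "j+1 < m" using c j nm uw(2) by presburger
            have "\<exists>k. (u, w) = (fD n ^^ k) (1,2)"
              by (rule witE[OF FaK(3)[OF jm]]) (use c j 3 nm in \<open>auto simp: opp_def\<close>)
            then show ?thesis ..
          qed
        qed
      qed
    qed
  qed
  then show ?thesis using uw(1) by simp
qed

lemma DEFaces: "card (faces (ED n) (rotR (ED n) (RD n))) \<le> 2"
proof (rule card_faces_le2[OF FaE(3) _ RevEnd])
  show "0 < 2*n-1" using n2 by simp
  show "0 < 4*n-5" using n2 by simp
next
  fix d assume "d \<in> darts (ED n)"
  then show "(\<exists>k. d = (fD n ^^ k) (1,2)) \<or> (\<exists>k. d = (fD n ^^ k) (1,n+1))" by (rule DECov)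
qed

end


context fixes n :: nat assumes n2: "2 \<le> n"
begin

lemma nxnx: "i < 2*n \<Longrightarrow> nx n (nx n i) \<noteq> i" using n2 by (auto simp: nx_def)

lemma mobE_split: "mobius_E n = (\<lambda>i. {i, nx n i}) ` {..<2*n} \<union> (\<lambda>i. {i, i+n}) ` {..<n}"
proof -
  have "{{i, Suc i mod (2*n)} | i. i < 2*n} = (\<lambda>i. {i, nx n i}) ` {..<2*n}"
    using smod[OF n2] by force
  moreover have "{{i, i + n} | i. i < n} = (\<lambda>i. {i, i+n}) ` {..<n}" by force
  ultimately show ?thesis by (simp add: mobius_E_def)
qed

lemma card_E: "card (mobius_E n) = 3*n"
proof -
  have i1: "inj_on (\<lambda>i. {i, nx n i}) {..<2*n}"
  proof (rule inj_onI)
    fix i j assume h: "i \<in> {..<2*n}" "j \<in> {..<2*n}" "{i, nx n i} = {j, nx n j}"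
    then have "i = j \<or> (i = nx n j \<and> nx n i = j)" by (auto simp: doubleton_eq_iff)
    then show "i = j" using nxnx[of j] h by auto
  qed
  have i2: "inj_on (\<lambda>i. {i, i+n}) {..<n}"
    by (rule inj_onI) (auto simp: doubleton_eq_iff)
  have dj: "(\<lambda>i. {i, nx n i}) ` {..<2*n} \<inter> (\<lambda>i. {i, i+n}) ` {..<n} = {}"
  proof (rule ccontr)
    assume "(\<lambda>i. {i, nx n i}) ` {..<2*n} \<inter> (\<lambda>i. {i, i+n}) ` {..<n} \<noteq> {}"
    then obtain i j where h: "i < 2*n" "j < n" "{i, nx n i} = {j, j+n}" by auto
    then have "(i = j \<and> nx n i = j+n) \<or> (i = j+n \<and> nx n i = j)" by (auto simp: doubleton_eq_iff)
    then show False using h n2 by (auto simp: nx_def split: if_splits)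
  qed
  have "card (mobius_E n) = card ((\<lambda>i. {i, nx n i}) ` {..<2*n}) + card ((\<lambda>i. {i, i+n}) ` {..<n})"
    unfolding mobE_split by (rule card_Un_disjoint) (use dj in auto)
  also have "\<dots> = 2*n + n" using card_image[OF i1] card_image[OF i2] by simp
  finally show ?thesis by simp
qed

lemma finite_E: "finite (mobius_E n)" unfolding mobE_split by simp

lemma edge_form: "e \<in> mobius_E n \<Longrightarrow> \<exists>a b. e = {a, b} \<and> adj (mobius_E n) a b"
proof -
  assume e: "e \<in> mobius_E n"
  then consider (c) i where "i < 2*n" "e = {i, nx n i}" | (r) i where "i < n" "e = {i, i+n}"
    unfolding mobE_split by blast
  then show ?thesis
  proof cases
    case c
    then have "adj (mobius_E n) i (nx n i)" by (simp add: adjM[OF n2])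
    then show ?thesis using c by blast
  next
    case r
    then have "adj (mobius_E n) i (i+n)" by (simp add: adjM[OF n2] opp_def)
    then show ?thesis using r by blast
  qed
qed

lemma adj_edge: "adj E a b \<Longrightarrow> {a, b} \<in> E" by (simp add: adj_def)

lemma card_ED: "card (ED n) = 3*n - 3"
proof -
  let ?Z = "{{0, nx n 0}, {0, pv n 0}, {0, opp n 0}}"
  have n0: "0 < 2*n" using n2 by simp
  have "adj (mobius_E n) 0 (nx n 0)" "adj (mobius_E n) 0 (pv n 0)" "adj (mobius_E n) 0 (opp n 0)"
    using adjM[OF n2, of 0] n0 by auto
  then have ZE: "?Z \<subseteq> mobius_E n"
    using adj_edge[of "mobius_E n" 0 "nx n 0"] adj_edge[of "mobius_E n" 0 "pv n 0"]
      adj_edge[of "mobius_E n" 0 "opp n 0"] by simp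
  have ED: "ED n = mobius_E n - ?Z"
  proof
    show "ED n \<subseteq> mobius_E n - ?Z"
    proof
      fix e assume "e \<in> ED n"
      then have "e \<in> mobius_E n \<and> 0 \<notin> e" unfolding ED_def[OF n2] del_vertex_E_def by blast
      then show "e \<in> mobius_E n - ?Z" by blast
    qed
  next
    show "mobius_E n - ?Z \<subseteq> ED n"
    proof
      fix e assume e: "e \<in> mobius_E n - ?Z"
      then obtain a b where ab: "e = {a,b}" "adj (mobius_E n) a b" using edge_form by blast
      have "0 \<notin> e"
      proof
        assume "0 \<in> e"
        then have "a = 0 \<or> b = 0" using ab by auto
        then obtain c where c: "adj (mobius_E n) 0 c" "e = {0,c}"
        proof
          assume "a = 0" then show ?thesis using ab that by blast
        next
          assume "b = 0"
          then have "adj (mobius_E n) 0 a" "e = {0,a}" using ab adjM_sym[OF n2] by auto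
          then show ?thesis using that by blast
        qed
        then have "c = nx n 0 \<or> c = pv n 0 \<or> c = opp n 0" using adjM[OF n2] by blast
        then have "e \<in> ?Z" using c(2) by blast
        then show False using e by blast
      qed
      then show "e \<in> ED n" using e by (simp add: ED_def[OF n2] del_vertex_E_def)
    qed
  qed
  have cz: "card ?Z = 3"
  proof -
    have d: "nx n 0 \<noteq> pv n 0" "nx n 0 \<noteq> opp n 0" "pv n 0 \<noteq> opp n 0" "nx n 0 \<noteq> 0" "pv n 0 \<noteq> 0" using n0 n2 by simp_all
    have "{0, nx n 0} \<noteq> {0, pv n 0}" "{0, nx n 0} \<noteq> {0, opp n 0}" "{0, pv n 0} \<noteq> {0, opp n 0}"
      using d by (simp_all add: doubleton_eq_iff)
    then show ?thesis by simp
  qed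
  have "card (mobius_E n - ?Z) = card (mobius_E n) - card ?Z"
    by (rule card_Diff_subset[OF _ ZE]) (rule finite_subset[OF ZE finite_E])
  then show ?thesis unfolding ED using card_E cz by simp
qed

lemma card_V: "card (mobius_V n) = 2*n" by (simp add: mobius_V_def)
lemma card_V0: "card (del_vertex_V (mobius_V n) 0) = 2*n - 1"
  using n2 by (simp add: mobius_V_def del_vertex_V_def)

lemma genus_M: "max_genus (mobius_V n) (mobius_E n) = (int n + 1) div 2"
proof -
  let ?rho = "rotR (mobius_E n) (RM n)"
  let ?F = "card (faces (mobius_E n) ?rho)"
  have ne: "darts (mobius_E n) \<noteq> {}"
  proof -
    have "(0, nx n 0) \<in> darts (mobius_E n)" using n2 by (simp add: darts_def adjM)
    then show ?thesis by blast
  qed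
  have g: "(int n + 1) div 2 = (1 - int (card (mobius_V n)) + int (card (mobius_E n))) div 2"
    by (simp add: card_V card_E)
  have "(int n + 1) div 2 \<le> embedding_genus (mobius_V n) (mobius_E n) ?rho"
  proof (cases "even n")
    case True
    then have "?F \<le> 2" using EvFaces[OF n2] by simp
    then have "int n div 2 \<le> (2 - int (2*n) + int (3*n) - int ?F) div 2" by (intro zdiv_mono1) auto
    moreover have "(int n + 1) div 2 = int n div 2" using True by (auto elim!: evenE)
    ultimately show ?thesis by (simp add: embedding_genus_def card_V card_E)
  next
    case False
    then obtain m where m: "n = 2*m+1" by (rule oddE)
    then have "?F \<le> 1" using OFaces[OF n2 m] by simp
    then have "(int n + 1) div 2 \<le> (2 - int (2*n) + int (3*n) - int ?F) div 2" by (intro zdiv_mono1) auto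
    then show ?thesis by (simp add: embedding_genus_def card_V card_E)
  qed
  then show ?thesis by (intro max_genus_eq[OF finite_dartsM[OF n2] ne g rotM[OF n2]])
qed

lemma genus_D: "max_genus (del_vertex_V (mobius_V n) 0) (ED n) = (int n - 1) div 2"
proof -
  let ?rho = "rotR (ED n) (RD n)"
  let ?F = "card (faces (ED n) ?rho)"
  let ?V = "del_vertex_V (mobius_V n) 0"
  have ne: "darts (ED n) \<noteq> {}"
  proof -
    have "nx n 1 = 2" using n2 by (auto simp: nx_def)
    then have "(1, 2) \<in> darts (ED n)" using n2 by (simp add: darts_def adjD adjM)
    then show ?thesis by blast
  qed
  have ci: "int (card ?V) = 2 * int n - 1" "int (card (ED n)) = 3 * int n - 3"
    using card_V0 card_ED n2 by auto
  have g: "(int n - 1) div 2 = (1 - int (card ?V) + int (card (ED n))) div 2"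
    using ci by (simp add: algebra_simps)
  have "(int n - 1) div 2 \<le> embedding_genus ?V (ED n) ?rho"
  proof (cases "even n")
    case True
    then obtain m where m: "n = 2*m" by (rule evenE)
    then have "?F \<le> 2" using DEFaces[OF n2 m] by simp
    then have "(int n - 2) div 2 \<le> (int n - int ?F) div 2" by (intro zdiv_mono1) auto
    moreover have "(int n - 1) div 2 = (int n - 2) div 2" using m by simp
    ultimately show ?thesis using ci by (simp add: embedding_genus_def algebra_simps)
  next
    case False
    then obtain m where m: "n = 2*m+1" by (rule oddE)
    then have "?F \<le> 1" using DOFaces[OF n2 m] by simp
    then have "(int n - 1) div 2 \<le> (int n - int ?F) div 2" by (intro zdiv_mono1) auto
    then show ?thesis using ci by (simp add: embedding_genus_def algebra_simps)
  qed
  then show ?thesis by (intro max_genus_eq[OF finite_dartsD[OF n2] ne g rotD[OF n2]])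
qed

lemma conn_D: "graph_connected (del_vertex_V (mobius_V n) 0) (ED n)"
proof -
  let ?r = "{(x, y). adj (ED n) x y}"
  have st: "adj (ED n) k (k+1) \<and> adj (ED n) (k+1) k" if "1 \<le> k" "k+1 < 2*n" for k
  proof -
    have "nx n k = k+1" using that by (auto simp: nx_def)
    moreover have "pv n (k+1) = k" by (simp add: pv_def)
    ultimately show ?thesis using that by (simp add: adjD[OF n2] adjM[OF n2])
  qed
  have p: "(1, a) \<in> ?r\<^sup>* \<and> (a, 1) \<in> ?r\<^sup>*" if "1 \<le> a" "a < 2*n" for a
    using that
  proof (induction a)
    case 0 then show ?case by simp
  next
    case (Suc a)
    show ?case
    proof (cases "a = 0")
      case True then show ?thesis by simp
    next
      case False
      then have ih: "(1, a) \<in> ?r\<^sup>* \<and> (a, 1) \<in> ?r\<^sup>*" using Suc by simp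
      have "adj (ED n) a (a+1) \<and> adj (ED n) (a+1) a" using st[of a] False Suc.prems by simp
      then have "(a, Suc a) \<in> ?r" "(Suc a, a) \<in> ?r" by auto
      then show ?thesis using ih by (meson rtrancl_into_rtrancl converse_rtrancl_into_rtrancl)
    qed
  qed
  have V: "del_vertex_V (mobius_V n) 0 = {1..<2*n}" by (auto simp: mobius_V_def del_vertex_V_def)
  show ?thesis unfolding graph_connected_def V
  proof (intro conjI ballI)
    show "{1..<2*n} \<noteq> {}" using n2 by simp
  next
    fix u v assume "u \<in> {1..<2*n}" "v \<in> {1..<2*n}"
    then show "(u, v) \<in> ?r\<^sup>*" using p by (meson atLeastLessThan_iff rtrancl_trans)
  qed
qed

end


definition sh :: "nat \<Rightarrow> nat \<Rightarrow> nat \<Rightarrow> nat" where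
  "sh n v i = (if i < 2*n then (i + v) mod (2*n) else i)"

context fixes n :: nat assumes n2: "2 \<le> n"
begin

lemma sh_lt: "i < 2*n \<Longrightarrow> sh n v i < 2*n" using n2 by (simp add: sh_def)

lemma sh_comp: "sh n w (sh n v i) = sh n (v+w) i"
proof (cases "i < 2*n")
  case True
  then have "sh n w (sh n v i) = ((i + v) mod (2*n) + w) mod (2*n)" using sh_lt[OF True] by (simp add: sh_def)
  also have "\<dots> = (i + (v + w)) mod (2*n)" by (simp add: mod_add_left_eq add.assoc)
  finally show ?thesis using True by (simp add: sh_def)
qed (simp add: sh_def)

lemma sh_N: "sh n (2*n) i = i" by (simp add: sh_def)

lemma sh_bij: "v \<le> 2*n \<Longrightarrow> bij (sh n v)"
proof (rule o_bij[where g = "sh n (2*n - v)"])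
  assume "v \<le> 2*n"
  then show "sh n (2*n - v) \<circ> sh n v = id" "sh n v \<circ> sh n (2*n - v) = id"
    by (auto simp: fun_eq_iff sh_comp sh_N)
qed

lemma nx_mod: "i < 2*n \<Longrightarrow> nx n i = (i + 1) mod (2*n)"
  by (auto simp: nx_def)
lemma pv_mod: "i < 2*n \<Longrightarrow> pv n i = (i + (2*n - 1)) mod (2*n)"
proof (cases "i = 0")
  case False
  assume "i < 2*n"
  then have "i + (2*n - 1) = (i - 1) + 1 * (2*n)" using False by simp
  then have "(i + (2*n - 1)) mod (2*n) = (i - 1) mod (2*n)" by (metis mod_mult_self1)
  then show ?thesis using False \<open>i < 2*n\<close> by (simp add: pv_def)
qed (use n2 in \<open>simp add: pv_def\<close>)
lemma opp_mod: "i < 2*n \<Longrightarrow> opp n i = (i + n) mod (2*n)"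
proof -
  assume i: "i < 2*n"
  show ?thesis
  proof (cases "i < n")
    case True then show ?thesis by (simp add: opp_def)
  next
    case False
    then have "i + n = (i - n) + 1 * (2*n)" by simp
    then have "(i + n) mod (2*n) = (i - n) mod (2*n)" by (metis mod_mult_self1)
    then show ?thesis using False i by (simp add: opp_def)
  qed
qed

lemma sh_shift: "i < 2*n \<Longrightarrow> sh n v ((i + c) mod (2*n)) = (sh n v i + c) mod (2*n)"
proof -
  assume i: "i < 2*n"
  have "sh n v ((i + c) mod (2*n)) = ((i + c) mod (2*n) + v) mod (2*n)" using n2 by (simp add: sh_def)
  also have "\<dots> = (i + c + v) mod (2*n)" by (simp add: mod_add_left_eq)
  also have "\<dots> = ((i + v) mod (2*n) + c) mod (2*n)"
    by (simp only: mod_add_left_eq) (simp only: add_ac)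
  finally show ?thesis using i by (simp add: sh_def)
qed

lemma sh_adj: "adj (mobius_E n) a b \<Longrightarrow> adj (mobius_E n) (sh n v a) (sh n v b)"
proof -
  assume "adj (mobius_E n) a b"
  then have a: "a < 2*n" "b = nx n a \<or> b = pv n a \<or> b = opp n a" using adjM[OF n2] by auto
  have s: "sh n v a < 2*n" using sh_lt a by simp
  have "sh n v b = nx n (sh n v a) \<or> sh n v b = pv n (sh n v a) \<or> sh n v b = opp n (sh n v a)"
    using a(2)
  proof (elim disjE)
    assume h: "b = nx n a"
    show ?thesis by (rule disjI1) (simp only: h nx_mod[OF a(1)] sh_shift[OF a(1)] nx_mod[OF s])
  next
    assume h: "b = pv n a"
    show ?thesis by (rule disjI2, rule disjI1) (simp only: h pv_mod[OF a(1)] sh_shift[OF a(1)] pv_mod[OF s])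
  next
    assume h: "b = opp n a"
    show ?thesis by (rule disjI2, rule disjI2) (simp only: h opp_mod[OF a(1)] sh_shift[OF a(1)] opp_mod[OF s])
  qed
  then show ?thesis using s by (simp add: adjM[OF n2])
qed

lemma sh_E: assumes v: "v \<le> 2*n" shows "(`) (sh n v) ` mobius_E n = mobius_E n"
proof -
  have sub: "(`) (sh n v) ` mobius_E n \<subseteq> mobius_E n"
  proof
    fix x assume "x \<in> (`) (sh n v) ` mobius_E n"
    then obtain e where e: "e \<in> mobius_E n" "x = sh n v ` e" by blast
    then obtain a b where ab: "e = {a,b}" "adj (mobius_E n) a b" using edge_form[OF n2] by blast
    have "adj (mobius_E n) (sh n v a) (sh n v b)" using sh_adj ab by simp
    then have "{sh n v a, sh n v b} \<in> mobius_E n" by (rule adj_edge[OF n2])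
    then show "x \<in> mobius_E n" using e ab by simp
  qed
  have "inj (sh n v)" using sh_bij[OF v] by (simp add: bij_is_inj)
  then have "inj ((`) (sh n v))" by (simp add: inj_image_eq_iff inj_def)
  then have "card ((`) (sh n v) ` mobius_E n) = card (mobius_E n)" by (simp add: card_image inj_on_subset)
  then show ?thesis using card_subset_eq[OF finite_E[OF n2] sub] by simp
qed

lemma sh_V: assumes v: "v \<le> 2*n" shows "sh n v ` mobius_V n = mobius_V n"
proof -
  have sub: "sh n v ` mobius_V n \<subseteq> mobius_V n" using sh_lt by (auto simp: mobius_V_def)
  have "inj (sh n v)" using sh_bij[OF v] by (simp add: bij_is_inj)
  then have "card (sh n v ` mobius_V n) = card (mobius_V n)" by (simp add: card_image inj_on_subset)
  then show ?thesis using card_subset_eq[OF _ sub] by (simp add: mobius_V_def)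
qed

lemma crit: assumes v: "v \<in> mobius_V n" shows "one_critical_vertex (mobius_V n) (mobius_E n) v"
proof -
  let ?f = "sh n v"
  have vl: "v < 2*n" using v by (simp add: mobius_V_def)
  have b: "bij ?f" using sh_bij vl by simp
  have f0: "?f 0 = v" using vl n2 by (simp add: sh_def)
  have dV: "del_vertex_V (mobius_V n) v = ?f ` del_vertex_V (mobius_V n) 0"
    using iso_del_V[OF b, of "mobius_V n" 0] sh_V vl f0 by simp
  have dE: "del_vertex_E (mobius_E n) v = (`) ?f ` ED n"
    using iso_del_E[OF b, of "mobius_E n" 0] sh_E vl f0 ED_def[OF n2] by simp
  have c: "graph_connected (del_vertex_V (mobius_V n) v) (del_vertex_E (mobius_E n) v)"
    unfolding dV dE by (rule iso_conn[OF b conn_D[OF n2]])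
  have "max_genus (del_vertex_V (mobius_V n) v) (del_vertex_E (mobius_E n) v)
        = max_genus (del_vertex_V (mobius_V n) 0) (ED n)"
    unfolding dV dE by (rule iso_max_genus[OF b])
  also have "\<dots> = (int n - 1) div 2" by (rule genus_D[OF n2])
  also have "\<dots> = max_genus (mobius_V n) (mobius_E n) - 1" using genus_M[OF n2] by simp
  finally show ?thesis using v c by (simp add: one_critical_vertex_def)
qed

end

theorem theorem2p1:
  fixes n :: nat
  assumes "n \<ge> 2"
  shows "\<forall>v \<in> mobius_V n. one_critical_vertex (mobius_V n) (mobius_E n) v"
  using crit[OF assms] by blast


end
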